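(* Fix $s\in(0,1)$ and let $F,V_s,\psi_1,\psi_3,p_{+,s},q_{-,s},q_+$ and $\overline H_s$ be as in the context. Then $0<p_{+,s}<q_{-,s}<q_+$ and: (a) if $0\le p\le p_{+,s}$, then $\overline H_s(p)=0$; (b) if $p_{+,s}\le p\le q_{-,s}$, then $\overline H_s(p)$ is the unique $\lambda\in[0,1/3]$ with $p=\int_\lambda^{1/3}\psi_3(y)dy+\int_{1/2}^{1+\lambda}\psi_1(y)dy+\int_{1/3}^{1/2}[s\psi_1(y)+(1-s)\psi_3(y)]dy$; (c) if $q_{-,s}\le p\le q_+$, then $\overline H_s(p)=1/3$; (d) if $p\ge q_+$, then $\overline H_s(p)$ is the unique $\lambda\ge1/3$ with $p=\int_\lambda^{1+\lambda}\psi_1(y)dy$; (e) if $p<0$, then $\overline H_s(p)=\overline H_{1-s}(-p)$.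
   Context: $F:\mathbb R\to\mathbb R$ is smooth and even, and for some $0<\theta_3<\theta_2<\theta_1$: $F(0)=0$, $F(\theta_2)=1/2$, $F(\theta_1)=F(\theta_3)=1/3$, $F(r)\to+\infty$ as $r\to\infty$, $F$ strictly increasing on $[0,\theta_2]\cup[\theta_1,\infty)$ and strictly decreasing on $[\theta_2,\theta_1]$. For $r\in(0,1)$, $V_r$ is the $1$-periodic function with $V_r(x)=x/r$ for $0\le x\le r$ and $V_r(x)=(1-x)/(1-r)$ for $r<x\le1$, and $\overline H_r(p)$ is the unique constant $\lambda$ for which $F(w'(y))-V_r(y)=\lambda$ in $\mathbb R$ has a viscosity solution $w$ with $w(x)-px$ periodic. $\psi_1:=(F|_{[\theta_1,\infty)})^{-1}:[1/3,\infty)\to[\theta_1,\infty)$ and $\psi_3:=(F|_{[0,\theta_2]})^{-1}:[0,1/2]\to[0,\theta_2]$. Further, $p_{+,s}:=\int_0^{1/3}\psi_3+\int_{1/2}^1\psi_1+\int_{1/3}^{1/2}[s\psi_1+(1-s)\psi_3]$, $q_{-,s}:=\int_{1/2}^{4/3}\psi_1+\int_{1/3}^{1/2}[s\psi_1+(1-s)\psi_3]$, $q_+:=\int_{1/3}^{4/3}\psi_1$ (integrals in $dy$). *)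

theory Defs
  imports "HOL-Analysis.Analysis"
begin

definition smooth_fun :: "(real \<Rightarrow> real) \<Rightarrow> bool" where
  "smooth_fun f \<longleftrightarrow> (\<forall>n x. ((deriv ^^ n) f) differentiable (at x))"

definition Vr :: "real \<Rightarrow> real \<Rightarrow> real" where
  "Vr r x = (let t = frac x in if t \<le> r then t / r else (1 - t) / (1 - r))"

definition C1_fun :: "(real \<Rightarrow> real) \<Rightarrow> bool" where
  "C1_fun \<phi> \<longleftrightarrow> \<phi> differentiable_on UNIV \<and> continuous_on UNIV (deriv \<phi>)"

definition visc_sub :: "(real \<Rightarrow> real) \<Rightarrow> (real \<Rightarrow> real) \<Rightarrow> real \<Rightarrow> (real \<Rightarrow> real) \<Rightarrow> bool" where
  "visc_sub F V lam w \<longleftrightarrow> continuous_on UNIV w \<and>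
     (\<forall>\<phi> x. C1_fun \<phi> \<longrightarrow>
        (\<exists>e>0. \<forall>y. \<bar>y - x\<bar> < e \<longrightarrow> w y - \<phi> y \<le> w x - \<phi> x) \<longrightarrow>
        F (deriv \<phi> x) - V x \<le> lam)"

definition visc_super :: "(real \<Rightarrow> real) \<Rightarrow> (real \<Rightarrow> real) \<Rightarrow> real \<Rightarrow> (real \<Rightarrow> real) \<Rightarrow> bool" where
  "visc_super F V lam w \<longleftrightarrow> continuous_on UNIV w \<and>
     (\<forall>\<phi> x. C1_fun \<phi> \<longrightarrow>
        (\<exists>e>0. \<forall>y. \<bar>y - x\<bar> < e \<longrightarrow> w y - \<phi> y \<ge> w x - \<phi> x) \<longrightarrow>
        F (deriv \<phi> x) - V x \<ge> lam)"

definition visc_sol :: "(real \<Rightarrow> real) \<Rightarrow> (real \<Rightarrow> real) \<Rightarrow> real \<Rightarrow> (real \<Rightarrow> real) \<Rightarrow> bool" where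
  "visc_sol F V lam w \<longleftrightarrow> visc_sub F V lam w \<and> visc_super F V lam w"

definition Hbar :: "(real \<Rightarrow> real) \<Rightarrow> real \<Rightarrow> real \<Rightarrow> real" where
  "Hbar F r p = (THE lam. \<exists>w. visc_sol F (Vr r) lam w \<and>
                    (\<forall>x. w (x + 1) - p * (x + 1) = w x - p * x))"

definition psi1 :: "(real \<Rightarrow> real) \<Rightarrow> real \<Rightarrow> real \<Rightarrow> real" where
  "psi1 F \<theta>1 = the_inv_into {\<theta>1..} F"

definition psi3 :: "(real \<Rightarrow> real) \<Rightarrow> real \<Rightarrow> real \<Rightarrow> real" where
  "psi3 F \<theta>2 = the_inv_into {0..\<theta>2} F"

definition mixint :: "(real \<Rightarrow> real) \<Rightarrow> real \<Rightarrow> real \<Rightarrow> real \<Rightarrow> real" where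
  "mixint F \<theta>1 \<theta>2 s = integral {1/3..1/2} (\<lambda>y. s * psi1 F \<theta>1 y + (1 - s) * psi3 F \<theta>2 y)"

definition p_plus :: "(real \<Rightarrow> real) \<Rightarrow> real \<Rightarrow> real \<Rightarrow> real \<Rightarrow> real" where
  "p_plus F \<theta>1 \<theta>2 s = integral {0..1/3} (psi3 F \<theta>2) + integral {1/2..1} (psi1 F \<theta>1)
      + mixint F \<theta>1 \<theta>2 s"

definition q_minus :: "(real \<Rightarrow> real) \<Rightarrow> real \<Rightarrow> real \<Rightarrow> real \<Rightarrow> real" where
  "q_minus F \<theta>1 \<theta>2 s = integral {1/2..4/3} (psi1 F \<theta>1) + mixint F \<theta>1 \<theta>2 s"

definition q_plus :: "(real \<Rightarrow> real) \<Rightarrow> real \<Rightarrow> real" where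
  "q_plus F \<theta>1 = integral {1/3..4/3} (psi1 F \<theta>1)"

end

theory Submission
  imports Defs
begin


locale HJ =
  fixes F :: "real \<Rightarrow> real" and \<theta>1 \<theta>2 \<theta>3 :: real
  assumes contF: "continuous_on UNIV F"
    and even: "\<And>x. F (- x) = F x"
    and th: "0 < \<theta>3" "\<theta>3 < \<theta>2" "\<theta>2 < \<theta>1"
    and vals: "F 0 = 0" "F \<theta>2 = 1/2" "F \<theta>1 = 1/3" "F \<theta>3 = 1/3"
    and big: "\<And>B. \<exists>x\<ge>\<theta>1. B \<le> F x"
    and m1: "\<And>x y. 0 \<le> x \<Longrightarrow> x < y \<Longrightarrow> y \<le> \<theta>2 \<Longrightarrow> F x < F y"
    and m2: "\<And>x y. \<theta>1 \<le> x \<Longrightarrow> x < y \<Longrightarrow> F x < F y"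
    and an: "\<And>x y. \<theta>2 \<le> x \<Longrightarrow> x < y \<Longrightarrow> y \<le> \<theta>1 \<Longrightarrow> F y < F x"
begin

abbreviation "\<psi>1 \<equiv> psi1 F \<theta>1"
abbreviation "\<psi>3 \<equiv> psi3 F \<theta>2"
definition "\<psi>2 = the_inv_into {\<theta>2..\<theta>1} F"

lemma Fabs: "F q = F \<bar>q\<bar>"
  by (cases "q \<ge> 0") (auto simp: even)

lemma m1': "0 \<le> x \<Longrightarrow> x \<le> y \<Longrightarrow> y \<le> \<theta>2 \<Longrightarrow> F x \<le> F y"
  using m1[of x y] by (cases "x = y") auto
lemma m2': "\<theta>1 \<le> x \<Longrightarrow> x \<le> y \<Longrightarrow> F x \<le> F y"
  using m2[of x y] by (cases "x = y") auto
lemma an': "\<theta>2 \<le> x \<Longrightarrow> x \<le> y \<Longrightarrow> y \<le> \<theta>1 \<Longrightarrow> F y \<le> F x"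
  using an[of x y] by (cases "x = y") auto

lemma inj1: "inj_on F {\<theta>1..}"
  by (rule inj_onI) (metis atLeast_iff linorder_neqE_linordered_idom m2 order_less_irrefl)
lemma inj3: "inj_on F {0..\<theta>2}"
  by (rule inj_onI) (metis atLeastAtMost_iff linorder_neqE_linordered_idom m1 order_less_irrefl)
lemma inj2: "inj_on F {\<theta>2..\<theta>1}"
  by (rule inj_onI) (metis atLeastAtMost_iff linorder_neqE_linordered_idom an order_less_irrefl)

lemma contF': "continuous_on S F"
  using contF continuous_on_subset by blast

lemma ex1: assumes "1/3 \<le> v" shows "\<exists>x. \<theta>1 \<le> x \<and> F x = v"
proof -
  obtain b where b: "b \<ge> \<theta>1" "v \<le> F b" using big by blast
  from IVT'[of F \<theta>1 v b] b assms vals contF' show ?thesis by force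
qed

lemma psi1: assumes "1/3 \<le> v" shows "\<theta>1 \<le> \<psi>1 v" "F (\<psi>1 v) = v"
proof -
  obtain x where x: "\<theta>1 \<le> x" "F x = v" using ex1 assms by blast
  have "\<psi>1 v = x" unfolding psi1_def by (rule the_inv_into_f_eq[OF inj1]) (use x in auto)
  then show "\<theta>1 \<le> \<psi>1 v" "F (\<psi>1 v) = v" using x by auto
qed

lemma psi1_eq: "\<theta>1 \<le> x \<Longrightarrow> F x = v \<Longrightarrow> \<psi>1 v = x"
  unfolding psi1_def by (rule the_inv_into_f_eq[OF inj1]) auto

lemma psi3: assumes "0 \<le> v" "v \<le> 1/2" shows "0 \<le> \<psi>3 v" "\<psi>3 v \<le> \<theta>2" "F (\<psi>3 v) = v"
proof -
  obtain x where x: "0 \<le> x" "x \<le> \<theta>2" "F x = v"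
    using IVT'[of F 0 v \<theta>2] assms vals th contF' by force
  have "\<psi>3 v = x" unfolding psi3_def by (rule the_inv_into_f_eq[OF inj3]) (use x in auto)
  then show "0 \<le> \<psi>3 v" "\<psi>3 v \<le> \<theta>2" "F (\<psi>3 v) = v" using x by auto
qed

lemma psi3_eq: "0 \<le> x \<Longrightarrow> x \<le> \<theta>2 \<Longrightarrow> F x = v \<Longrightarrow> \<psi>3 v = x"
  unfolding psi3_def by (rule the_inv_into_f_eq[OF inj3]) auto

lemma psi2: assumes "1/3 \<le> v" "v \<le> 1/2" shows "\<theta>2 \<le> \<psi>2 v" "\<psi>2 v \<le> \<theta>1" "F (\<psi>2 v) = v"
proof -
  obtain x where x: "\<theta>2 \<le> x" "x \<le> \<theta>1" "F x = v"
    using IVT2'[of F \<theta>1 v \<theta>2] assms vals th contF' by force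
  have "\<psi>2 v = x" unfolding \<psi>2_def by (rule the_inv_into_f_eq[OF inj2]) (use x in auto)
  then show "\<theta>2 \<le> \<psi>2 v" "\<psi>2 v \<le> \<theta>1" "F (\<psi>2 v) = v" using x by auto
qed

lemma psi2_eq: "\<theta>2 \<le> x \<Longrightarrow> x \<le> \<theta>1 \<Longrightarrow> F x = v \<Longrightarrow> \<psi>2 v = x"
  unfolding \<psi>2_def by (rule the_inv_into_f_eq[OF inj2]) auto

lemma psi_vals: "\<psi>1 (1/3) = \<theta>1" "\<psi>3 (1/3) = \<theta>3" "\<psi>3 (1/2) = \<theta>2" "\<psi>3 0 = 0"
  "\<psi>2 (1/2) = \<theta>2" "\<psi>2 (1/3) = \<theta>1"
  using psi1_eq psi3_eq psi2_eq vals th by auto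

lemma psi1_mono: assumes "1/3 \<le> u" "u < v" shows "\<psi>1 u < \<psi>1 v"
proof (rule ccontr)
  assume "\<not> ?thesis"
  then have "F (\<psi>1 v) \<le> F (\<psi>1 u)" using m2'[of "\<psi>1 v" "\<psi>1 u"] psi1[of v] assms by force
  then show False using psi1 assms by auto
qed

lemma psi1_mono': "1/3 \<le> u \<Longrightarrow> u \<le> v \<Longrightarrow> \<psi>1 u \<le> \<psi>1 v"
  using psi1_mono[of u v] by (cases "u = v") auto

lemma psi3_mono': assumes "0 \<le> u" "u \<le> v" "v \<le> 1/2" shows "\<psi>3 u \<le> \<psi>3 v"
proof (rule ccontr)
  assume "\<not> ?thesis"
  then have "\<psi>3 v < \<psi>3 u" by simp
  moreover have "0 \<le> \<psi>3 v" "\<psi>3 u \<le> \<theta>2" using psi3[of v] psi3[of u] assms by auto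
  ultimately have "F (\<psi>3 v) < F (\<psi>3 u)" using m1[of "\<psi>3 v" "\<psi>3 u"] by blast
  then show False using psi3 assms by auto
qed

lemma cont3: "continuous_on {0..1/2} \<psi>3"
proof -
  have "continuous_on (F ` {0..\<theta>2}) \<psi>3"
    by (rule continuous_on_inv[OF contF']) (auto simp: psi3_def the_inv_into_f_f[OF inj3])
  moreover have "{0..1/2} \<subseteq> F ` {0..\<theta>2}"
  proof
    fix v assume "v \<in> {0..(1/2::real)}"
    then show "v \<in> F ` {0..\<theta>2}" using psi3[of v] by (auto intro!: image_eqI[of _ _ "\<psi>3 v"])
  qed
  ultimately show ?thesis using continuous_on_subset by blast
qed

lemma cont2: "continuous_on {1/3..1/2} \<psi>2"
proof -
  have "continuous_on (F ` {\<theta>2..\<theta>1}) \<psi>2"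
    by (rule continuous_on_inv[OF contF']) (auto simp: \<psi>2_def the_inv_into_f_f[OF inj2])
  moreover have "{1/3..1/2} \<subseteq> F ` {\<theta>2..\<theta>1}"
  proof
    fix v assume "v \<in> {1/3..(1/2::real)}"
    then show "v \<in> F ` {\<theta>2..\<theta>1}" using psi2[of v] by (auto intro!: image_eqI[of _ _ "\<psi>2 v"])
  qed
  ultimately show ?thesis using continuous_on_subset by blast
qed

lemma cont1b: assumes "b \<ge> \<theta>1" shows "continuous_on {1/3..F b} \<psi>1"
proof -
  have "continuous_on (F ` {\<theta>1..b}) \<psi>1"
    by (rule continuous_on_inv[OF contF']) (auto simp: psi1_def the_inv_into_f_f[OF inj1])
  moreover have "{1/3..F b} \<subseteq> F ` {\<theta>1..b}"
  proof
    fix v assume v: "v \<in> {1/3..F b}"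
    then have "\<psi>1 v \<le> b" using psi1[of v] m2[of b "\<psi>1 v"] assms by force
    then show "v \<in> F ` {\<theta>1..b}" using psi1[of v] v by (auto intro!: image_eqI[of _ _ "\<psi>1 v"])
  qed
  ultimately show ?thesis using continuous_on_subset by blast
qed

definition "P1 v = \<psi>1 (max (1/3) v)"
definition "P2 v = \<psi>2 (max (1/3) (min (1/2) v))"
definition "P3 v = \<psi>3 (max 0 (min (1/2) v))"

lemma contP3: "continuous_on UNIV P3"
  unfolding P3_def
  by (rule continuous_on_compose2[OF cont3]) (auto intro!: continuous_intros)

lemma contP2: "continuous_on UNIV P2"
  unfolding P2_def
  by (rule continuous_on_compose2[OF cont2]) (auto intro!: continuous_intros)

lemma contP1: "continuous_on UNIV P1"
proof -
  have "isCont P1 x" for x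
  proof -
    obtain b where b: "b \<ge> \<theta>1" "max x 1 + 1 \<le> F b" using big by blast
    have Fb: "2 \<le> F b" "x < F b" using b(2) by (auto simp: max_def split: if_splits)
    have "continuous_on {..<F b} P1" unfolding P1_def
      by (rule continuous_on_compose2[OF cont1b[OF b(1)]]) (use Fb in \<open>auto intro!: continuous_intros\<close>)
    moreover have "x \<in> {..<F b}" using b by auto
    ultimately show ?thesis using continuous_on_eq_continuous_at[of "{..<F b}" P1] by auto
  qed
  then show ?thesis by (simp add: continuous_at_imp_continuous_on)
qed

lemma P1: "1/3 \<le> v \<Longrightarrow> P1 v = \<psi>1 v" by (simp add: P1_def max_def)
lemma P2: "1/3 \<le> v \<Longrightarrow> v \<le> 1/2 \<Longrightarrow> P2 v = \<psi>2 v"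
proof -
  assume "1/3 \<le> v" "v \<le> 1/2"
  then have "max (1/3) (min (1/2) v) = v" by linarith
  then show ?thesis by (simp add: P2_def)
qed
lemma P3: "0 \<le> v \<Longrightarrow> v \<le> 1/2 \<Longrightarrow> P3 v = \<psi>3 v"
proof -
  assume "0 \<le> v" "v \<le> 1/2"
  then have "max 0 (min (1/2) v) = v" by linarith
  then show ?thesis by (simp add: P3_def)
qed

lemma FA: assumes "1/3 \<le> v" "v \<le> 1/2" "\<psi>3 v \<le> \<bar>q\<bar>" "\<bar>q\<bar> \<le> \<psi>2 v" shows "v \<le> F q"
proof (cases "\<bar>q\<bar> \<le> \<theta>2")
  case True
  then show ?thesis using m1'[of "\<psi>3 v" "\<bar>q\<bar>"] psi3[of v] assms Fabs[of q] by auto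
next
  case False
  then show ?thesis using an'[of "\<bar>q\<bar>" "\<psi>2 v"] psi2[of v] assms Fabs[of q] by auto
qed

lemma FB: assumes "1/3 \<le> v" "v \<le> 1/2" "\<psi>2 v \<le> \<bar>q\<bar>" "\<bar>q\<bar> \<le> \<psi>1 v" shows "F q \<le> v"
proof (cases "\<bar>q\<bar> \<le> \<theta>1")
  case True
  then show ?thesis using an'[of "\<psi>2 v" "\<bar>q\<bar>"] psi2[of v] assms Fabs[of q] by auto
next
  case False
  then show ?thesis using m2'[of "\<bar>q\<bar>" "\<psi>1 v"] psi1[of v] assms Fabs[of q] by auto
qed

lemma FC: assumes "0 \<le> v" "v \<le> 1/2" "\<bar>q\<bar> \<le> \<psi>3 v" shows "F q \<le> v"
  using m1'[of "\<bar>q\<bar>" "\<psi>3 v"] psi3[of v] assms Fabs[of q] by auto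

lemma FD: assumes "1/2 \<le> v" "\<bar>q\<bar> \<le> \<psi>1 v" shows "F q \<le> v"
proof -
  consider "\<bar>q\<bar> \<le> \<theta>2" | "\<theta>2 \<le> \<bar>q\<bar>" "\<bar>q\<bar> \<le> \<theta>1" | "\<theta>1 \<le> \<bar>q\<bar>" by linarith
  then show ?thesis
  proof cases
    case 1 then show ?thesis using m1'[of "\<bar>q\<bar>" \<theta>2] vals assms Fabs[of q] by auto
  next
    case 2 then show ?thesis using an'[of \<theta>2 "\<bar>q\<bar>"] vals assms Fabs[of q] by auto
  next
    case 3 then show ?thesis using m2'[of "\<bar>q\<bar>" "\<psi>1 v"] psi1[of v] assms Fabs[of q] by auto
  qed
qed

end


definition Vt :: "real \<Rightarrow> real \<Rightarrow> real" where "Vt s t = min (t/s) ((1-t)/(1-s))"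

lemma Vr_Vt: assumes "0 < s" "s < 1" shows "Vr s x = Vt s (frac x)"
proof -
  have t: "0 \<le> frac x" "frac x < 1" by (auto simp: frac_lt_1)
  show ?thesis
  proof (cases "frac x \<le> s")
    case True
    then have "frac x / s \<le> 1" "1 \<le> (1 - frac x) / (1 - s)" using assms t
      by (auto simp: divide_le_eq_1 le_divide_eq_1)
    then show ?thesis using True by (simp add: Vr_def Vt_def Let_def)
  next
    case False
    then have "frac x / s \<ge> 1" "1 \<ge> (1 - frac x) / (1 - s)" using assms t
      by (auto simp: divide_le_eq_1 le_divide_eq_1)
    then show ?thesis using False by (simp add: Vr_def Vt_def Let_def min_def)
  qed
qed

lemma contVt: "continuous_on UNIV (Vt s)"
  unfolding Vt_def divide_inverse by (intro continuous_intros)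

definition cnt :: "(nat \<Rightarrow> real) \<Rightarrow> real \<Rightarrow> nat" where
  "cnt T t = (if T 1 \<le> t then 1 else 0) + (if T 2 \<le> t then 1 else 0) + (if T 3 \<le> t then 1 else 0)
     + (if T 4 \<le> t then 1 else 0) + (if T 5 \<le> t then 1 else 0)"
definition cntL :: "(nat \<Rightarrow> real) \<Rightarrow> real \<Rightarrow> nat" where
  "cntL T t = (if T 1 < t then 1 else 0) + (if T 2 < t then 1 else 0) + (if T 3 < t then 1 else 0)
     + (if T 4 < t then 1 else 0) + (if T 5 < t then 1 else 0)"
definition srt :: "(nat \<Rightarrow> real) \<Rightarrow> bool" where
  "srt T \<longleftrightarrow> 0 \<le> T 1 \<and> T 1 \<le> T 2 \<and> T 2 \<le> T 3 \<and> T 3 \<le> T 4 \<and> T 4 \<le> T 5 \<and> T 5 \<le> 1"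

definition Gam :: "(nat \<Rightarrow> real) \<Rightarrow> (nat \<Rightarrow> real \<Rightarrow> real) \<Rightarrow> real \<Rightarrow> real" where
  "Gam T H t = H (cnt T t) t"
definition Wf :: "(nat \<Rightarrow> real) \<Rightarrow> (nat \<Rightarrow> real \<Rightarrow> real) \<Rightarrow> real \<Rightarrow> real" where
  "Wf T H t = integral {0..t} (Gam T H)"
definition wf :: "(nat \<Rightarrow> real) \<Rightarrow> (nat \<Rightarrow> real \<Rightarrow> real) \<Rightarrow> real \<Rightarrow> real" where
  "wf T H x = Wf T H 1 * of_int \<lfloor>x\<rfloor> + Wf T H (frac x)"
definition jumpok :: "(real \<Rightarrow> real) \<Rightarrow> real \<Rightarrow> real \<Rightarrow> real \<Rightarrow> bool" where
  "jumpok F a b v \<longleftrightarrow> (\<forall>q. b \<le> q \<and> q \<le> a \<longrightarrow> F q \<le> v) \<and> (\<forall>q. a \<le> q \<and> q \<le> b \<longrightarrow> v \<le> F q)"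

lemma jumpok_eq: "F a = v \<Longrightarrow> jumpok F a a v"
  unfolding jumpok_def by auto
lemma jumpok_down: "b \<le> a \<Longrightarrow> F a = v \<Longrightarrow> (\<And>q. b \<le> q \<Longrightarrow> q \<le> a \<Longrightarrow> F q \<le> v) \<Longrightarrow> jumpok F a b v"
  unfolding jumpok_def
proof (intro conjI allI impI)
  fix q assume "b \<le> a" "F a = v" "a \<le> q \<and> q \<le> b"
  then have "q = a" by linarith
  then show "v \<le> F q" using \<open>F a = v\<close> by simp
qed auto
lemma jumpok_up: "a \<le> b \<Longrightarrow> F a = v \<Longrightarrow> (\<And>q. a \<le> q \<Longrightarrow> q \<le> b \<Longrightarrow> v \<le> F q) \<Longrightarrow> jumpok F a b v"
  unfolding jumpok_def
proof (intro conjI allI impI)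
  fix q assume "a \<le> b" "F a = v" "b \<le> q \<and> q \<le> a"
  then have "q = a" by linarith
  then show "F q \<le> v" using \<open>F a = v\<close> by simp
qed auto

lemma piece_has_integral:
  fixes a b :: real and g h :: "real \<Rightarrow> real"
  assumes "a \<le> b" "continuous_on {a..b} h" "\<And>t. a < t \<Longrightarrow> t < b \<Longrightarrow> g t = h t"
  shows "(g has_integral integral {a..b} h) {a..b}"
proof -
  have hi: "(h has_integral integral {a..b} h) {a..b}"
    using integrable_continuous_interval[OF assms(2)] by (simp add: has_integral_integral)
  show ?thesis
    using has_integral_spike_finite[OF _ _ hi, of "{a,b}" g] assms(3) by auto
qed

lemma Gam_has_integral:
  assumes "srt T" "\<And>i. continuous_on {0..1} (H i)"
  shows "(Gam T H has_integral
     (integral {0..T 1} (H 0) + integral {T 1..T 2} (H 1) + integral {T 2..T 3} (H 2)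
      + integral {T 3..T 4} (H 3) + integral {T 4..T 5} (H 4) + integral {T 5..1} (H 5))) {0..1}"
proof -
  have s: "0 \<le> T 1" "T 1 \<le> T 2" "T 2 \<le> T 3" "T 3 \<le> T 4" "T 4 \<le> T 5" "T 5 \<le> 1"
    using assms(1) by (auto simp: srt_def)
  have c: "continuous_on {a..b} (H i)" if "0 \<le> a" "b \<le> 1" for a b i
    using assms(2)[of i] continuous_on_subset that by fastforce
  have i0: "(Gam T H has_integral integral {0..T 1} (H 0)) {0..T 1}"
    by (rule piece_has_integral) (use s in \<open>auto intro!: c simp: Gam_def cnt_def eval_nat_numeral\<close>)
  have i1: "(Gam T H has_integral integral {T 1..T 2} (H 1)) {T 1..T 2}"
    by (rule piece_has_integral) (use s in \<open>auto intro!: c simp: Gam_def cnt_def eval_nat_numeral\<close>)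
  have i2: "(Gam T H has_integral integral {T 2..T 3} (H 2)) {T 2..T 3}"
    by (rule piece_has_integral) (use s in \<open>auto intro!: c simp: Gam_def cnt_def eval_nat_numeral\<close>)
  have i3: "(Gam T H has_integral integral {T 3..T 4} (H 3)) {T 3..T 4}"
    by (rule piece_has_integral) (use s in \<open>auto intro!: c simp: Gam_def cnt_def eval_nat_numeral\<close>)
  have i4: "(Gam T H has_integral integral {T 4..T 5} (H 4)) {T 4..T 5}"
    by (rule piece_has_integral) (use s in \<open>auto intro!: c simp: Gam_def cnt_def eval_nat_numeral\<close>)
  have i5: "(Gam T H has_integral integral {T 5..1} (H 5)) {T 5..1}"
    by (rule piece_has_integral) (use s in \<open>auto intro!: c simp: Gam_def cnt_def eval_nat_numeral\<close>)
  have j1: "(Gam T H has_integral (integral {0..T 1} (H 0) + integral {T 1..T 2} (H 1))) {0..T 2}"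
    using has_integral_combine[OF _ _ i0 i1] s by auto
  have j2: "(Gam T H has_integral (integral {0..T 1} (H 0) + integral {T 1..T 2} (H 1)
     + integral {T 2..T 3} (H 2))) {0..T 3}"
    using has_integral_combine[OF _ _ j1 i2] s by auto
  have j3: "(Gam T H has_integral (integral {0..T 1} (H 0) + integral {T 1..T 2} (H 1)
     + integral {T 2..T 3} (H 2) + integral {T 3..T 4} (H 3))) {0..T 4}"
    using has_integral_combine[OF _ _ j2 i3] s by auto
  have j4: "(Gam T H has_integral (integral {0..T 1} (H 0) + integral {T 1..T 2} (H 1)
     + integral {T 2..T 3} (H 2) + integral {T 3..T 4} (H 3) + integral {T 4..T 5} (H 4))) {0..T 5}"
    using has_integral_combine[OF _ _ j3 i4] s by auto
  show ?thesis
    using has_integral_combine[OF _ _ j4 i5] s by auto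
qed

lemma Gam_integrable: "srt T \<Longrightarrow> (\<And>i. continuous_on {0..1} (H i)) \<Longrightarrow> Gam T H integrable_on {0..1}"
  using Gam_has_integral by blast

lemma ev_right_le: "eventually (\<lambda>r. (c \<le> r) = (c \<le> t)) (at_right (t::real))"
proof (cases "c \<le> t")
  case True
  then show ?thesis using eventually_at_right_less[of t] by (auto elim!: eventually_mono)
next
  case False
  then have "c > t" by auto
  then show ?thesis unfolding eventually_at_right_field by (intro exI[of _ c]) (use False \<open>c > t\<close> in auto)
qed

lemma ev_left_le: "eventually (\<lambda>r. (c \<le> r) = (c < t)) (at_left (t::real))"
proof (cases "c < t")
  case True
  then show ?thesis unfolding eventually_at_left_field by (intro exI[of _ c]) (use True in auto)
next
  case False
  then show ?thesis unfolding eventually_at_left_field by (intro exI[of _ "t - 1"]) auto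
qed

lemma ev_cnt_right: "eventually (\<lambda>r. cnt T r = cnt T t) (at_right t)"
proof -
  have "eventually (\<lambda>r. (T 1 \<le> r) = (T 1 \<le> t) \<and> (T 2 \<le> r) = (T 2 \<le> t) \<and> (T 3 \<le> r) = (T 3 \<le> t)
     \<and> (T 4 \<le> r) = (T 4 \<le> t) \<and> (T 5 \<le> r) = (T 5 \<le> t)) (at_right t)"
    by (intro eventually_conj ev_right_le)
  then show ?thesis by (rule eventually_mono) (simp add: cnt_def)
qed

lemma ev_cnt_left: "eventually (\<lambda>r. cnt T r = cntL T t) (at_left t)"
proof -
  have "eventually (\<lambda>r. (T 1 \<le> r) = (T 1 < t) \<and> (T 2 \<le> r) = (T 2 < t) \<and> (T 3 \<le> r) = (T 3 < t)
     \<and> (T 4 \<le> r) = (T 4 < t) \<and> (T 5 \<le> r) = (T 5 < t)) (at_left t)"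
    by (intro eventually_conj ev_left_le)
  then show ?thesis by (rule eventually_mono) (simp add: cnt_def cntL_def)
qed

lemma RD:
  assumes "(f has_real_derivative D) (at t within {t..b})" "t < b"
  shows "((\<lambda>h. (f (t + h) - f t) / h) \<longlongrightarrow> D) (at_right 0)"
proof -
  have "((\<lambda>y. (f y - f t) / (y - t)) \<longlongrightarrow> D) (at_right t)"
    using assms by (simp add: has_field_derivative_iff at_within_Icc_at_right)
  then have "((\<lambda>h. (f (h + t) - f t) / (h + t - t)) \<longlongrightarrow> D) (at_right 0)"
    unfolding at_right_to_0[of t] by (simp add: filterlim_filtermap)
  then show ?thesis by (simp add: add.commute)
qed

lemma LD:
  assumes "(f has_real_derivative D) (at t within {a..t})" "a < t"
  shows "((\<lambda>h. (f (t - h) - f t) / (- h)) \<longlongrightarrow> D) (at_right 0)"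
proof -
  have "((\<lambda>y. (f y - f t) / (y - t)) \<longlongrightarrow> D) (at_left t)"
    using assms by (simp add: has_field_derivative_iff at_within_Icc_at_left)
  then have "((\<lambda>h. (f (- (h + - t)) - f t) / (- (h + - t) - t)) \<longlongrightarrow> D) (at_right 0)"
    unfolding at_left_minus[of t] at_right_to_0[of "-t"] by (simp add: filterlim_filtermap)
  then show ?thesis by simp
qed

lemma floor_right: fixes x h :: real assumes "0 \<le> h" "h < 1 - frac x"
  shows "\<lfloor>x + h\<rfloor> = \<lfloor>x\<rfloor>" "frac (x + h) = frac x + h"
proof -
  show *: "\<lfloor>x + h\<rfloor> = \<lfloor>x\<rfloor>"
  proof (rule floor_unique)
    show "of_int \<lfloor>x\<rfloor> \<le> x + h" using of_int_floor_le[of x] assms(1) by linarith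
    show "x + h < of_int \<lfloor>x\<rfloor> + 1" using assms(2) unfolding frac_def by linarith
  qed
  show "frac (x + h) = frac x + h" by (simp add: frac_def *)
qed

lemma floor_left: fixes x h :: real assumes "0 \<le> h" "h \<le> frac x"
  shows "\<lfloor>x - h\<rfloor> = \<lfloor>x\<rfloor>" "frac (x - h) = frac x - h"
proof -
  show *: "\<lfloor>x - h\<rfloor> = \<lfloor>x\<rfloor>" by (intro floor_unique) (use assms frac_lt_1[of x] in \<open>auto simp: frac_def\<close>)
  show "frac (x - h) = frac x - h" by (simp add: frac_def *)
qed

lemma floor_left0: fixes x h :: real assumes "0 < h" "h \<le> 1" "frac x = 0"
  shows "\<lfloor>x - h\<rfloor> = \<lfloor>x\<rfloor> - 1" "frac (x - h) = 1 - h"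
proof -
  show *: "\<lfloor>x - h\<rfloor> = \<lfloor>x\<rfloor> - 1" by (intro floor_unique) (use assms in \<open>auto simp: frac_def\<close>)
  show "frac (x - h) = 1 - h" using assms by (simp add: frac_def *)
qed

locale frame =
  fixes T :: "nat \<Rightarrow> real" and H :: "nat \<Rightarrow> real \<Rightarrow> real"
  assumes srtT: "srt T" and contH: "\<And>i. continuous_on {0..1} (H i)"
begin

abbreviation "A i u \<equiv> integral {0..u} (H i)"
abbreviation "W \<equiv> Wf T H"
abbreviation "w \<equiv> wf T H"

lemma A_deriv: "0 \<le> u \<Longrightarrow> u \<le> 1 \<Longrightarrow> (A i has_real_derivative H i u) (at u within {0..1})"
  using integral_has_vector_derivative[OF contH[of i], of u]
  by (simp add: has_real_derivative_iff_has_vector_derivative)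

lemma W_diff:
  assumes "0 \<le> t" "t \<le> u" "u \<le> 1" "\<And>r. t < r \<Longrightarrow> r < u \<Longrightarrow> cnt T r = j"
  shows "W u - W t = A j u - A j t"
proof -
  have gi: "Gam T H integrable_on {0..u}"
    using Gam_integrable[OF srtT contH] integrable_subinterval_real assms by fastforce
  have hi: "H j integrable_on {0..u}"
    using integrable_continuous_interval[OF continuous_on_subset[OF contH[of j]]] assms by auto
  have "W u = W t + integral {t..u} (Gam T H)"
    using Henstock_Kurzweil_Integration.integral_combine[OF assms(1,2) gi] by (simp add: Wf_def)
  moreover have "A j u = A j t + integral {t..u} (H j)"
    using Henstock_Kurzweil_Integration.integral_combine[OF assms(1,2) hi] by simp
  moreover have "integral {t..u} (Gam T H) = integral {t..u} (H j)"
    by (rule integral_spike[of "{t,u}"]) (use assms(4) in \<open>auto simp: Gam_def\<close>)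
  ultimately show ?thesis by simp
qed

lemma W_right:
  assumes "0 \<le> t" "t < 1"
  shows "((\<lambda>h. (W (t + h) - W t) / h) \<longlongrightarrow> H (cnt T t) t) (at_right 0)"
proof -
  define j where "j = cnt T t"
  obtain b where b: "b > t" "\<And>r. r > t \<Longrightarrow> r < b \<Longrightarrow> cnt T r = j"
    using ev_cnt_right[of T t] unfolding eventually_at_right_field j_def by blast
  define d where "d = min b 1"
  have d: "t < d" "d \<le> 1" "d \<le> b" using b assms by (auto simp: d_def)
  have "(A j has_real_derivative H j t) (at t within {t..d})"
    using A_deriv[of t j] assms d by (auto elim: DERIV_subset)
  from RD[OF this d(1)] have *: "((\<lambda>h. (A j (t + h) - A j t) / h) \<longlongrightarrow> H j t) (at_right 0)" .
  have "eventually (\<lambda>h. (A j (t + h) - A j t) / h = (W (t + h) - W t) / h) (at_right 0)"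
    unfolding eventually_at_right_field
  proof (intro exI[of _ "d - t"] conjI allI impI)
    fix h :: real assume h: "h > 0" "h < d - t"
    have "W (t + h) - W t = A j (t + h) - A j t"
      by (rule W_diff) (use h d assms b in auto)
    then show "(A j (t + h) - A j t) / h = (W (t + h) - W t) / h" by simp
  qed (use d in auto)
  from tendsto_cong[OF this] * show ?thesis by (simp add: j_def)
qed

lemma W_left:
  assumes "0 < t" "t \<le> 1"
  shows "((\<lambda>h. (W (t - h) - W t) / (- h)) \<longlongrightarrow> H (cntL T t) t) (at_right 0)"
proof -
  define j where "j = cntL T t"
  obtain b where b: "b < t" "\<And>r. r > b \<Longrightarrow> r < t \<Longrightarrow> cnt T r = j"
    using ev_cnt_left[of T t] unfolding eventually_at_left_field j_def by blast
  define d where "d = max b 0"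
  have d: "d < t" "0 \<le> d" "b \<le> d" using b assms by (auto simp: d_def)
  have "(A j has_real_derivative H j t) (at t within {d..t})"
    using A_deriv[of t j] assms d by (auto elim: DERIV_subset)
  from LD[OF this d(1)] have *: "((\<lambda>h. (A j (t - h) - A j t) / (- h)) \<longlongrightarrow> H j t) (at_right 0)" .
  have "eventually (\<lambda>h. (A j (t - h) - A j t) / (- h) = (W (t - h) - W t) / (- h)) (at_right 0)"
    unfolding eventually_at_right_field
  proof (intro exI[of _ "t - d"] conjI allI impI)
    fix h :: real assume h: "h > 0" "h < t - d"
    have "W t - W (t - h) = A j t - A j (t - h)"
      by (rule W_diff) (use h d assms b in auto)
    then show "(A j (t - h) - A j t) / (- h) = (W (t - h) - W t) / (- h)" by simp
  qed (use d in auto)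
  from tendsto_cong[OF this] * show ?thesis by (simp add: j_def)
qed

lemma W0: "W 0 = 0" by (simp add: Wf_def)

lemma w_right: "((\<lambda>h. (w (x + h) - w x) / h) \<longlongrightarrow> H (cnt T (frac x)) (frac x)) (at_right 0)"
proof -
  have t: "0 \<le> frac x" "frac x < 1" by (auto simp: frac_lt_1)
  have "eventually (\<lambda>h. (W (frac x + h) - W (frac x)) / h = (w (x + h) - w x) / h) (at_right 0)"
    unfolding eventually_at_right_field
  proof (intro exI[of _ "1 - frac x"] conjI allI impI)
    fix h :: real assume h: "h > 0" "h < 1 - frac x"
    show "(W (frac x + h) - W (frac x)) / h = (w (x + h) - w x) / h"
      using floor_right[of h x] h by (simp add: wf_def)
  qed (use t in auto)
  from tendsto_cong[OF this] W_right[OF t] show ?thesis by simp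
qed

definition "Lw x = (if frac x = 0 then H (cntL T 1) 1 else H (cntL T (frac x)) (frac x))"

lemma w_left: "((\<lambda>h. (w (x - h) - w x) / (- h)) \<longlongrightarrow> Lw x) (at_right 0)"
proof (cases "frac x = 0")
  case True
  have "eventually (\<lambda>h. (W (1 - h) - W 1) / (- h) = (w (x - h) - w x) / (- h)) (at_right 0)"
    unfolding eventually_at_right_field
  proof (intro exI[of _ 1] conjI allI impI)
    fix h :: real assume h: "h > 0" "h < 1"
    show "(W (1 - h) - W 1) / (- h) = (w (x - h) - w x) / (- h)"
    proof -
      have f: "\<lfloor>x - h\<rfloor> = \<lfloor>x\<rfloor> - 1" "frac (x - h) = 1 - h" using floor_left0[of h x] h True by auto
      show ?thesis unfolding wf_def f True W0 by (simp add: algebra_simps)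
    qed
  qed auto
  from tendsto_cong[OF this] W_left[of 1] True show ?thesis by (simp add: Lw_def)
next
  case False
  have t: "0 < frac x" "frac x \<le> 1" using False by (auto simp: frac_lt_1 less_imp_le)
  have "eventually (\<lambda>h. (W (frac x - h) - W (frac x)) / (- h) = (w (x - h) - w x) / (- h)) (at_right 0)"
    unfolding eventually_at_right_field
  proof (intro exI[of _ "frac x"] conjI allI impI)
    fix h :: real assume h: "h > 0" "h < frac x"
    show "(W (frac x - h) - W (frac x)) / (- h) = (w (x - h) - w x) / (- h)"
      using floor_left[of h x] h by (simp add: wf_def)
  qed (use t in auto)
  from tendsto_cong[OF this] W_left[OF t] False show ?thesis by (simp add: Lw_def)
qed

lemma w_periodic: "w (x + 1) - W 1 * (x + 1) = w x - W 1 * x"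
proof -
  have "frac (x + 1) = frac x" by (rule frac_1_eq)
  moreover have "\<lfloor>x + 1\<rfloor> = \<lfloor>x\<rfloor> + 1" by simp
  ultimately show ?thesis unfolding wf_def by (simp add: algebra_simps)
qed

end

lemma right_cont:
  assumes "((\<lambda>h. (w (x + h) - w x) / h) \<longlongrightarrow> R) (at_right (0::real))"
  shows "(w \<longlongrightarrow> w x) (at_right x)"
proof -
  have "((\<lambda>h. w x + h * ((w (x + h) - w x) / h)) \<longlongrightarrow> w x + 0 * R) (at_right 0)"
    by (intro tendsto_intros assms)
  moreover have "eventually (\<lambda>h. w x + h * ((w (x + h) - w x) / h) = w (h + x)) (at_right 0)"
    unfolding eventually_at_right_field by (intro exI[of _ 1]) (auto simp: add.commute)
  ultimately have "((\<lambda>h. w (h + x)) \<longlongrightarrow> w x) (at_right 0)"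
    using tendsto_cong by force
  then show ?thesis unfolding at_right_to_0[of x] by (simp add: filterlim_filtermap)
qed

lemma left_cont:
  assumes "((\<lambda>h. (w (x - h) - w x) / (- h)) \<longlongrightarrow> L) (at_right (0::real))"
  shows "(w \<longlongrightarrow> w x) (at_left x)"
proof -
  have "((\<lambda>h. w x + (- h) * ((w (x - h) - w x) / (- h))) \<longlongrightarrow> w x + - 0 * L) (at_right 0)"
    by (intro tendsto_intros assms)
  moreover have "eventually (\<lambda>h. w x + (- h) * ((w (x - h) - w x) / (- h)) = w (- (h + - x))) (at_right 0)"
    unfolding eventually_at_right_field by (intro exI[of _ 1]) auto
  ultimately have "((\<lambda>h. w (- (h + - x))) \<longlongrightarrow> w x) (at_right 0)"
    using tendsto_cong by force
  then show ?thesis unfolding at_left_minus[of x] at_right_to_0[of "-x"] by (simp add: filterlim_filtermap)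
qed

lemma deriv_quots:
  assumes "(f has_real_derivative D) (at x)"
  shows "((\<lambda>h. (f (x + h) - f x) / h) \<longlongrightarrow> D) (at_right 0)"
    "((\<lambda>h. (f (x - h) - f x) / (- h)) \<longlongrightarrow> D) (at_right 0)"
proof -
  show "((\<lambda>h. (f (x + h) - f x) / h) \<longlongrightarrow> D) (at_right 0)"
    by (rule RD[of _ _ _ "x+1"]) (use assms in \<open>auto intro: has_field_derivative_at_within\<close>)
  show "((\<lambda>h. (f (x - h) - f x) / (- h)) \<longlongrightarrow> D) (at_right 0)"
    by (rule LD[of _ _ _ "x-1"]) (use assms in \<open>auto intro: has_field_derivative_at_within\<close>)
qed

lemma C1_deriv: "C1_fun \<phi> \<Longrightarrow> (\<phi> has_real_derivative deriv \<phi> x) (at x)"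
  unfolding C1_fun_def DERIV_deriv_iff_real_differentiable
  by (simp add: differentiable_on_def)

lemma visc_from_onesided:
  fixes w V :: "real \<Rightarrow> real"
  assumes R: "\<And>x. ((\<lambda>h. (w (x + h) - w x) / h) \<longlongrightarrow> R x) (at_right 0)"
    and L: "\<And>x. ((\<lambda>h. (w (x - h) - w x) / (- h)) \<longlongrightarrow> L x) (at_right 0)"
    and J: "\<And>x. jumpok F (L x) (R x) (lam + V x)"
  shows "visc_sol F V lam w"
proof -
  have cont: "continuous_on UNIV w"
  proof -
    have "isCont w x" for x
      unfolding isCont_def
      by (rule filterlim_split_at[OF left_cont[OF L] right_cont[OF R]])
    then show ?thesis by (simp add: continuous_at_imp_continuous_on)
  qed
  have nb: "at_right (0::real) \<noteq> bot" by simp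
  have sub: "R x \<le> deriv \<phi> x \<and> deriv \<phi> x \<le> L x"
    if "C1_fun \<phi>" "e > 0" "\<And>y. \<bar>y - x\<bar> < e \<Longrightarrow> w y - \<phi> y \<le> w x - \<phi> x" for \<phi> x e
  proof
    note q = deriv_quots[OF C1_deriv[OF that(1)], of x]
    have "eventually (\<lambda>h. (w (x + h) - w x) / h \<le> (\<phi> (x + h) - \<phi> x) / h) (at_right 0)"
      unfolding eventually_at_right_field
    proof (intro exI[of _ e] conjI allI impI)
      fix h :: real assume h: "0 < h" "h < e"
      then have "w (x + h) - w x \<le> \<phi> (x + h) - \<phi> x" using that(3)[of "x + h"] by auto
      then show "(w (x + h) - w x) / h \<le> (\<phi> (x + h) - \<phi> x) / h" using h by (simp add: divide_right_mono)
    qed (use that in auto)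
    from tendsto_le[OF nb q(1) R this] show "R x \<le> deriv \<phi> x" .
    have "eventually (\<lambda>h. (\<phi> (x - h) - \<phi> x) / (- h) \<le> (w (x - h) - w x) / (- h)) (at_right 0)"
      unfolding eventually_at_right_field
    proof (intro exI[of _ e] conjI allI impI)
      fix h :: real assume h: "0 < h" "h < e"
      then have "w (x - h) - w x \<le> \<phi> (x - h) - \<phi> x" using that(3)[of "x - h"] by auto
      then show "(\<phi> (x - h) - \<phi> x) / (- h) \<le> (w (x - h) - w x) / (- h)" using h by (simp add: divide_simps)
    qed (use that in auto)
    from tendsto_le[OF nb L q(2) this] show "deriv \<phi> x \<le> L x" .
  qed
  have super: "L x \<le> deriv \<phi> x \<and> deriv \<phi> x \<le> R x"
    if "C1_fun \<phi>" "e > 0" "\<And>y. \<bar>y - x\<bar> < e \<Longrightarrow> w y - \<phi> y \<ge> w x - \<phi> x" for \<phi> x e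
  proof
    note q = deriv_quots[OF C1_deriv[OF that(1)], of x]
    have "eventually (\<lambda>h. (\<phi> (x + h) - \<phi> x) / h \<le> (w (x + h) - w x) / h) (at_right 0)"
      unfolding eventually_at_right_field
    proof (intro exI[of _ e] conjI allI impI)
      fix h :: real assume h: "0 < h" "h < e"
      then have "w (x + h) - w x \<ge> \<phi> (x + h) - \<phi> x" using that(3)[of "x + h"] by auto
      then show "(\<phi> (x + h) - \<phi> x) / h \<le> (w (x + h) - w x) / h" using h by (simp add: divide_right_mono)
    qed (use that in auto)
    from tendsto_le[OF nb R q(1) this] show "deriv \<phi> x \<le> R x" .
    have "eventually (\<lambda>h. (w (x - h) - w x) / (- h) \<le> (\<phi> (x - h) - \<phi> x) / (- h)) (at_right 0)"
      unfolding eventually_at_right_field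
    proof (intro exI[of _ e] conjI allI impI)
      fix h :: real assume h: "0 < h" "h < e"
      then have "w (x - h) - w x \<ge> \<phi> (x - h) - \<phi> x" using that(3)[of "x - h"] by auto
      then show "(w (x - h) - w x) / (- h) \<le> (\<phi> (x - h) - \<phi> x) / (- h)" using h by (simp add: divide_simps)
    qed (use that in auto)
    from tendsto_le[OF nb q(2) L this] show "L x \<le> deriv \<phi> x" .
  qed
  show ?thesis
    unfolding visc_sol_def visc_sub_def visc_super_def
  proof (intro conjI allI impI cont)
    fix \<phi> x assume "C1_fun \<phi>" "\<exists>e>0. \<forall>y. \<bar>y - x\<bar> < e \<longrightarrow> w y - \<phi> y \<le> w x - \<phi> x"
    then show "F (deriv \<phi> x) - V x \<le> lam"
      using sub J[of x] unfolding jumpok_def by (smt (verit, best))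
  next
    fix \<phi> x assume "C1_fun \<phi>" "\<exists>e>0. \<forall>y. \<bar>y - x\<bar> < e \<longrightarrow> w y - \<phi> y \<ge> w x - \<phi> x"
    then show "lam \<le> F (deriv \<phi> x) - V x"
      using super J[of x] unfolding jumpok_def by (smt (verit, best))
  qed
qed


lemma int_periodic:
  fixes a :: "real \<Rightarrow> real"
  assumes "\<And>x. a (x + 1) = a x"
  shows "a (x + of_int n) = a x"
proof -
  have pos: "a (y + real k) = a y" for y k
  proof (induction k)
    case (Suc k)
    have "a (y + real (Suc k)) = a (y + real k + 1)" by (simp add: algebra_simps)
    also have "\<dots> = a (y + real k)" by (rule assms)
    finally show ?case using Suc by simp
  qed simp
  have neg: "a (y - real k) = a y" for y k
  proof (induction k)
    case (Suc k)
    have "a (y - real (Suc k)) = a (y - real (Suc k) + 1)" by (rule assms[symmetric])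
    also have "y - real (Suc k) + 1 = y - real k" by simp
    finally show ?case using Suc by simp
  qed simp
  show ?thesis
  proof (cases "n \<ge> 0")
    case True
    then show ?thesis using pos[of x "nat n"] by simp
  next
    case False
    then show ?thesis using neg[of x "nat (- n)"] by simp
  qed
qed

lemma periodic_bounded:
  fixes a :: "real \<Rightarrow> real"
  assumes "\<And>x. a (x + 1) = a x" "continuous_on UNIV a"
  shows "\<exists>M. \<forall>x. \<bar>a x\<bar> \<le> M"
proof -
  have "compact (a ` {0..1})"
    by (rule compact_continuous_image) (use assms(2) continuous_on_subset in auto)
  then obtain M where M: "\<forall>y\<in>a ` {0..1}. norm y \<le> M"
    using compact_imp_bounded bounded_iff by metis
  have "\<bar>a x\<bar> \<le> M" for x
  proof -
    have "a x = a (frac x + of_int \<lfloor>x\<rfloor>)" by (simp add: frac_def)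
    also have "\<dots> = a (frac x)" by (rule int_periodic[of a, OF assms(1)])
    finally show ?thesis using M frac_ge_0[of x] frac_lt_1[of x] by auto
  qed
  then show ?thesis by blast
qed

lemma C1_quad:
  fixes c y0 k :: real
  shows "C1_fun (\<lambda>x. c + k * (x - y0)^2) \<and> deriv (\<lambda>x. c + k * (x - y0)^2) x = 2 * k * (x - y0)"
proof -
  have d: "((\<lambda>x. c + k * (x - y0)^2) has_real_derivative 2 * k * (x - y0)) (at x)" for x
    by (auto intro!: derivative_eq_intros)
  then have dd: "deriv (\<lambda>x. c + k * (x - y0)^2) = (\<lambda>x. 2 * k * (x - y0))"
    using DERIV_imp_deriv by blast
  show ?thesis unfolding C1_fun_def dd
    using d by (auto intro!: continuous_intros simp: differentiable_on_def real_differentiable_def)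
qed

lemma comparison:
  fixes u v V :: "real \<Rightarrow> real"
  assumes sub: "visc_sub F V l1 u" and super: "visc_super F V l2 v"
    and pu: "\<And>x. u (x + 1) - p * (x + 1) = u x - p * x"
    and pv: "\<And>x. v (x + 1) - p * (x + 1) = v x - p * x"
    and Lip: "\<And>x y. \<bar>V x - V y\<bar> \<le> K * \<bar>x - y\<bar>" and K: "K > 0"
  shows "l2 \<le> l1"
proof (rule ccontr)
  assume "\<not> l2 \<le> l1"
  then have dl: "l2 - l1 > 0" by simp
  define \<delta> where "\<delta> = l2 - l1"
  have cu: "continuous_on UNIV u" using sub by (simp add: visc_sub_def)
  have cv: "continuous_on UNIV v" using super by (simp add: visc_super_def)
  define a where "a x = u x - p * x" for x
  define b where "b x = v x - p * x" for x
  have pa: "a (x + 1) = a x" for x using pu by (simp add: a_def)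
  have pb: "b (x + 1) = b x" for x using pv by (simp add: b_def)
  have ca: "continuous_on UNIV a" unfolding a_def by (intro continuous_intros cu)
  have cb: "continuous_on UNIV b" unfolding b_def by (intro continuous_intros cv)
  obtain Ma where Ma: "\<And>x. \<bar>a x\<bar> \<le> Ma"
    using periodic_bounded[of a, OF pa ca] by blast
  obtain Mb where Mb: "\<And>x. \<bar>b x\<bar> \<le> Mb"
    using periodic_bounded[of b, OF pb cb] by blast
  define M where "M = max (max Ma Mb) 0"
  have aM: "\<bar>a x\<bar> \<le> M" and bM: "\<bar>b x\<bar> \<le> M" and M0: "M \<ge> 0" for x
    using Ma[of x] Mb[of x] by (auto simp: M_def)
  define C where "C = 2 * M + \<bar>p\<bar> + 1"
  have C: "C \<ge> 1" using M0 by (simp add: C_def)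
  define \<epsilon> where "\<epsilon> = min (1 / (4 * C)) (\<delta>^2 / (4 * K^2 * C))"
  have \<epsilon>: "\<epsilon> > 0" using C K dl by (auto simp: \<epsilon>_def \<delta>_def)
  have \<epsilon>1: "2 * \<epsilon> * C < 1" using C by (auto simp: \<epsilon>_def min_def field_simps)
  have \<epsilon>2: "2 * \<epsilon> * C < \<delta>^2 / K^2"
  proof -
    have e: "\<epsilon> \<le> \<delta>^2 / (4 * K^2 * C)" by (simp add: \<epsilon>_def)
    have "2 * \<epsilon> * C = 2 * C * \<epsilon>" by simp
    also have "\<dots> \<le> 2 * C * (\<delta>^2 / (4 * K^2 * C))" using mult_left_mono[OF e, of "2*C"] C by simp
    also have "\<dots> = \<delta>^2 / K^2 / 2" using C K by (simp add: field_simps)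
    also have "\<dots> < \<delta>^2 / K^2"
    proof -
      have "\<delta>^2 / K^2 > 0" using dl K by (simp add: \<delta>_def)
      moreover have "\<And>X::real. X > 0 \<Longrightarrow> X / 2 < X" by linarith
      ultimately show ?thesis by blast
    qed
    finally show ?thesis .
  qed
  define k where "k = 1 / (2 * \<epsilon>)"
  have k: "k > 0" using \<epsilon> by (simp add: k_def)
  define \<Phi> where "\<Phi> x y = u x - v y - k * (x - y)^2" for x y
  have \<Phi>ab: "\<Phi> x y = a x - b y + p * (x - y) - k * (x - y)^2" for x y
    by (simp add: \<Phi>_def a_def b_def algebra_simps)
  have \<Phi>shift: "\<Phi> (x + of_int n) (y + of_int n) = \<Phi> x y" for x y n
    unfolding \<Phi>ab using int_periodic[of a, OF pa] int_periodic[of b, OF pb] by (simp add: algebra_simps)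
  have \<Phi>bound: "\<Phi> x y \<le> 2 * M + \<bar>p\<bar> * \<bar>x - y\<bar> - k * (x - y)^2" for x y
  proof -
    have "p * (x - y) \<le> \<bar>p\<bar> * \<bar>x - y\<bar>" by (metis abs_ge_self abs_mult)
    then show ?thesis unfolding \<Phi>ab using aM[of x] bM[of y] by linarith
  qed
  define R where "R = 2 + (4 * M + \<bar>p\<bar>) / k"
  have far: "\<Phi> x y < - 2 * M" if "\<bar>x - y\<bar> \<ge> R - 1" for x y
  proof -
    define d where "d = \<bar>x - y\<bar>"
    have q0: "(4 * M + \<bar>p\<bar>) / k \<ge> 0" using M0 k by simp
    have d1: "d \<ge> 1" and d2: "d > (4 * M + \<bar>p\<bar>) / k"
      using that q0 unfolding d_def R_def by linarith+
    have "k * d > 4 * M + \<bar>p\<bar>" using d2 k by (simp add: field_simps)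
    then have "k * d * d > (4 * M + \<bar>p\<bar>) * d" using d1 by (simp add: mult_strict_right_mono)
    moreover have "(4 * M + \<bar>p\<bar>) * d \<ge> 4 * M + \<bar>p\<bar> * d"
    proof -
      have "4 * M * 1 \<le> 4 * M * d" using mult_left_mono[OF d1, of "4*M"] M0 by simp
      then show ?thesis by (simp add: algebra_simps)
    qed
    moreover have "(x - y)^2 = d * d" by (simp add: d_def power2_eq_square abs_mult_self_eq)
    then have "\<Phi> x y \<le> 2 * M + \<bar>p\<bar> * d - k * d * d" using \<Phi>bound[of x y] unfolding d_def by simp
    ultimately show ?thesis by linarith
  qed
  define S where "S = {0..1::real} \<times> {-R..R}"
  have cS: "compact S" by (simp add: S_def compact_Times)
  have R1: "R \<ge> 2" using M0 k by (simp add: R_def)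
  have neS: "S \<noteq> {}" using R1 by (auto simp: S_def)
  have contS: "continuous_on S (\<lambda>z. \<Phi> (fst z) (snd z))"
    unfolding \<Phi>_def
    by (intro continuous_intros continuous_on_compose2[OF cu] continuous_on_compose2[OF cv]) auto
  obtain z0 where z0: "z0 \<in> S" "\<And>z. z \<in> S \<Longrightarrow> \<Phi> (fst z) (snd z) \<le> \<Phi> (fst z0) (snd z0)"
    using continuous_attains_sup[OF cS neS contS] by blast
  define x0 where "x0 = fst z0"
  define y0 where "y0 = snd z0"
  have gmax: "\<Phi> x y \<le> \<Phi> x0 y0" for x y
  proof -
    define n where "n = \<lfloor>x\<rfloor>"
    define x' where "x' = x - of_int n"
    define y' where "y' = y - of_int n"
    have e: "\<Phi> x y = \<Phi> x' y'" using \<Phi>shift[of x' n y'] by (simp add: x'_def y'_def)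
    have x': "0 \<le> x'" "x' \<le> 1" using frac_lt_1[of x] by (auto simp: x'_def n_def frac_def[symmetric] less_imp_le)
    have zz: "\<Phi> 0 0 \<le> \<Phi> x0 y0" using z0(2)[of "(0,0)"] R1 by (auto simp: S_def x0_def y0_def)
    have "\<Phi> 0 0 \<ge> - 2 * M" unfolding \<Phi>ab using aM[of 0] bM[of 0] by simp
    show ?thesis
    proof (cases "y' \<in> {-R..R}")
      case True
      then show ?thesis using z0(2)[of "(x', y')"] x' e by (auto simp: S_def x0_def y0_def)
    next
      case False
      then have "\<bar>x' - y'\<bar> \<ge> R - 1" using x' by auto
      then show ?thesis using far[of x' y'] e zz \<open>\<Phi> 0 0 \<ge> - 2 * M\<close> by linarith
    qed
  qed
  define d where "d = x0 - y0"
  have i: "k * d^2 \<le> 2 * M + \<bar>p\<bar> * \<bar>d\<bar>"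
  proof -
    have "\<Phi> x0 x0 \<le> \<Phi> x0 y0" by (rule gmax)
    then have "k * d^2 \<le> b x0 - b y0 + p * d" unfolding \<Phi>ab d_def by (simp add: algebra_simps)
    moreover have "p * d \<le> \<bar>p\<bar> * \<bar>d\<bar>" by (metis abs_ge_self abs_mult)
    ultimately show ?thesis using bM[of x0] bM[of y0] by linarith
  qed
  have dd: "2 * k * (x0 - y0) = d / \<epsilon>" by (simp add: k_def d_def)
  have t1: "F (d / \<epsilon>) - V x0 \<le> l1"
  proof -
    note q = C1_quad[of "v y0" k y0 x0]
    have "\<exists>e>0. \<forall>y. \<bar>y - x0\<bar> < e \<longrightarrow> u y - (v y0 + k * (y - y0)^2) \<le> u x0 - (v y0 + k * (x0 - y0)^2)"
    proof (intro exI[of _ 1] conjI allI impI)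
      fix y
      have "\<Phi> y y0 \<le> \<Phi> x0 y0" by (rule gmax)
      then show "u y - (v y0 + k * (y - y0)^2) \<le> u x0 - (v y0 + k * (x0 - y0)^2)"
        by (simp add: \<Phi>_def)
    qed simp
    then show ?thesis using sub q dd unfolding visc_sub_def by metis
  qed
  have t2: "l2 \<le> F (d / \<epsilon>) - V y0"
  proof -
    note q = C1_quad[of "u x0" "- k" x0 y0]
    have dd': "2 * - k * (y0 - x0) = d / \<epsilon>" using dd by (simp add: algebra_simps)
    have "\<exists>e>0. \<forall>y. \<bar>y - y0\<bar> < e \<longrightarrow> v y - (u x0 + - k * (y - x0)^2) \<ge> v y0 - (u x0 + - k * (y0 - x0)^2)"
    proof (intro exI[of _ 1] conjI allI impI)
      fix y
      have "\<Phi> x0 y \<le> \<Phi> x0 y0" by (rule gmax)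
      then show "v y - (u x0 + - k * (y - x0)^2) \<ge> v y0 - (u x0 + - k * (y0 - x0)^2)"
        by (simp add: \<Phi>_def power2_commute)
    qed simp
    then show ?thesis using super q dd' unfolding visc_super_def by metis
  qed
  have "\<delta> \<le> K * \<bar>d\<bar>" using t1 t2 Lip[of x0 y0] by (simp add: \<delta>_def d_def)
  then have "\<delta> / K \<le> \<bar>d\<bar>" using K by (simp add: pos_divide_le_eq mult.commute)
  moreover have "0 \<le> \<delta> / K" using dl K by (simp add: \<delta>_def)
  ultimately have "(\<delta> / K)^2 \<le> \<bar>d\<bar>^2" by (rule power_mono)
  then have dge: "\<delta>^2 / K^2 \<le> d^2" by (simp add: power_divide)
  have X: "2 * M + \<bar>p\<bar> * \<bar>d\<bar> \<le> C * max 1 (d^2)"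
  proof (cases "\<bar>d\<bar> \<ge> 1")
    case True
    have d2: "d^2 = \<bar>d\<bar> * \<bar>d\<bar>" by (simp add: power2_eq_square)
    have "\<bar>d\<bar> * 1 \<le> \<bar>d\<bar> * \<bar>d\<bar>" using True by (intro mult_left_mono) auto
    then have dd2: "\<bar>d\<bar> \<le> d^2" using d2 by simp
    have g1: "1 \<le> d^2" using True dd2 by linarith
    have "2 * M * 1 \<le> 2 * M * d^2" using g1 M0 by (intro mult_left_mono) auto
    moreover have "\<bar>p\<bar> * \<bar>d\<bar> \<le> \<bar>p\<bar> * d^2" using dd2 by (intro mult_left_mono) auto
    moreover have "d^2 \<ge> 0" by simp
    moreover have "C * d^2 = 2 * M * d^2 + \<bar>p\<bar> * d^2 + d^2" by (simp add: C_def algebra_simps)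
    ultimately have "2 * M + \<bar>p\<bar> * \<bar>d\<bar> \<le> C * d^2" by linarith
    then show ?thesis using g1 by (simp add: max_def)
  next
    case False
    have "\<bar>p\<bar> * \<bar>d\<bar> \<le> \<bar>p\<bar> * 1" using False by (intro mult_left_mono) auto
    then have "2 * M + \<bar>p\<bar> * \<bar>d\<bar> \<le> C" unfolding C_def by simp
    moreover have "C \<le> C * max 1 (d^2)" using C by (simp add: max_def)
    ultimately show ?thesis by linarith
  qed
  have "k * d^2 \<le> C * max 1 (d^2)" using i X by linarith
  then have "d^2 / (2 * \<epsilon>) \<le> C * max 1 (d^2)" by (simp add: k_def)
  then have Y: "d^2 \<le> 2 * \<epsilon> * C * max 1 (d^2)" using \<epsilon> by (simp add: pos_divide_le_eq algebra_simps)
  show False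
  proof (cases "d^2 \<ge> 1")
    case True
    then have "d^2 \<le> (2 * \<epsilon> * C) * d^2" using Y by (simp add: max_def)
    moreover have "(2 * \<epsilon> * C) * d^2 < 1 * d^2" using \<epsilon>1 True by (intro mult_strict_right_mono) auto
    ultimately show False by simp
  next
    case False
    then have "d^2 \<le> 2 * \<epsilon> * C" using Y by (simp add: max_def)
    then show False using \<epsilon>2 dge by linarith
  qed
qed


lemma min_lip: "\<bar>min x1 y1 - min x2 y2\<bar> \<le> max \<bar>x1 - x2\<bar> \<bar>y1 - y2\<bar>" for x1 y1 x2 y2 :: real
  by (simp add: min_def max_def abs_if)

lemma Vt_lip:
  assumes "0 < s" "s < 1"
  shows "\<bar>Vt s a - Vt s b\<bar> \<le> (1/s + 1/(1-s)) * \<bar>a - b\<bar>"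
proof -
  have "\<bar>Vt s a - Vt s b\<bar> \<le> max \<bar>a/s - b/s\<bar> \<bar>(1-a)/(1-s) - (1-b)/(1-s)\<bar>"
    unfolding Vt_def by (rule min_lip)
  also have "\<bar>a/s - b/s\<bar> = \<bar>a - b\<bar> / s" using assms by (simp add: diff_divide_distrib[symmetric])
  also have "\<bar>(1-a)/(1-s) - (1-b)/(1-s)\<bar> = \<bar>a - b\<bar> / (1 - s)"
    using assms by (simp add: diff_divide_distrib[symmetric] abs_minus_commute)
  also have "max (\<bar>a - b\<bar> / s) (\<bar>a - b\<bar> / (1 - s)) \<le> (1/s + 1/(1-s)) * \<bar>a - b\<bar>"
  proof -
    have "\<bar>a - b\<bar> / s \<ge> 0" "\<bar>a - b\<bar> / (1 - s) \<ge> 0" using assms by auto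
    moreover have "(1/s + 1/(1-s)) * \<bar>a - b\<bar> = \<bar>a - b\<bar> / s + \<bar>a - b\<bar> / (1 - s)"
      by (simp add: algebra_simps)
    ultimately show ?thesis by (simp add: max_def)
  qed
  finally show ?thesis .
qed

lemma Kpos: "0 < s \<Longrightarrow> s < 1 \<Longrightarrow> 0 < 1/s + 1/(1-s)" for s :: real
  by (intro add_pos_pos) auto

lemma Vt01: "Vt s 0 = 0" "Vt s 1 = 0" if "0 < s" "s < 1" using that by (auto simp: Vt_def min_def)

lemma Vr_lip:
  assumes "0 < s" "s < 1"
  shows "\<bar>Vr s x - Vr s y\<bar> \<le> (1/s + 1/(1-s)) * \<bar>x - y\<bar>"
proof -
  define K where "K = 1/s + 1/(1-s)"
  have K: "K > 0" using Kpos[OF assms] by (simp add: K_def)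
  have main: "\<bar>Vr s x - Vr s y\<bar> \<le> K * \<bar>x - y\<bar>" if xy: "x \<le> y" for x y
  proof (cases "\<lfloor>x\<rfloor> = \<lfloor>y\<rfloor>")
    case True
    then have "frac x - frac y = x - y" by (simp add: frac_def)
    then show ?thesis using Vt_lip[OF assms, of "frac x" "frac y"] by (simp add: Vr_Vt[OF assms] K_def)
  next
    case False
    then have lt: "\<lfloor>x\<rfloor> < \<lfloor>y\<rfloor>" using xy floor_mono[OF xy] by linarith
    have a1: "\<bar>Vt s (frac x) - Vt s 1\<bar> \<le> K * \<bar>frac x - 1\<bar>" using Vt_lip[OF assms, of "frac x" 1] by (simp only: K_def)
    have a2: "\<bar>Vt s 0 - Vt s (frac y)\<bar> \<le> K * \<bar>0 - frac y\<bar>" using Vt_lip[OF assms, of 0 "frac y"] by (simp only: K_def)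
    have b1: "\<bar>frac x - 1\<bar> \<le> of_int \<lfloor>y\<rfloor> - x"
      using lt frac_lt_1[of x] by (simp add: frac_def)
    have b2: "\<bar>0 - frac y\<bar> \<le> y - of_int \<lfloor>y\<rfloor>" by (simp add: frac_def)
    have "\<bar>Vr s x - Vr s y\<bar> \<le> \<bar>Vt s (frac x) - Vt s 1\<bar> + \<bar>Vt s 0 - Vt s (frac y)\<bar>"
      using Vt01[OF assms] by (simp add: Vr_Vt[OF assms])
    also have "\<dots> \<le> K * (of_int \<lfloor>y\<rfloor> - x) + K * (y - of_int \<lfloor>y\<rfloor>)"
      using a1 a2 b1 b2 K by (smt (verit) mult_left_mono)
    also have "\<dots> = K * \<bar>x - y\<bar>" using xy by (simp add: algebra_simps)
    finally show ?thesis .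
  qed
  show ?thesis
  proof (cases "x \<le> y")
    case True then show ?thesis using main K_def by auto
  next
    case False then show ?thesis using main[of y x] K_def by (simp add: abs_minus_commute)
  qed
qed

definition "wper w p \<longleftrightarrow> (\<forall>x. w (x + 1) - p * (x + 1) = w x - p * x)"

lemma Hbar_eq:
  assumes s: "0 < s" "s < 1" and sol: "visc_sol F (Vr s) lam w" and per: "wper w p"
  shows "Hbar F s p = lam"
  unfolding Hbar_def
proof (rule the_equality)
  show "\<exists>w. visc_sol F (Vr s) lam w \<and> (\<forall>x. w (x + 1) - p * (x + 1) = w x - p * x)"
    using sol per by (auto simp: wper_def)
  fix lam' assume "\<exists>w. visc_sol F (Vr s) lam' w \<and> (\<forall>x. w (x + 1) - p * (x + 1) = w x - p * x)"
  then obtain w' where w': "visc_sol F (Vr s) lam' w'" "\<And>x. w' (x + 1) - p * (x + 1) = w' x - p * x" by blast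
  have K: "1/s + 1/(1-s) > 0" using Kpos[OF s] by simp
  have "lam' \<le> lam"
    by (rule comparison[of F "Vr s" lam w lam' w' p, OF _ _ _ _ Vr_lip[OF s] K])
      (use sol w' per in \<open>auto simp: visc_sol_def wper_def\<close>)
  moreover have "lam \<le> lam'"
    by (rule comparison[of F "Vr s" lam' w' lam w p, OF _ _ _ _ Vr_lip[OF s] K])
      (use sol w' per in \<open>auto simp: visc_sol_def wper_def\<close>)
  ultimately show "lam' = lam" by simp
qed

lemma frac_neg: "frac (- x) = (if frac x = 0 then 0 else 1 - frac x)" for x :: real
proof (cases "frac x = 0")
  case True
  then have "x \<in> \<int>" by (simp add: frac_eq_0_iff)
  then show ?thesis using True by (simp add: frac_eq_0_iff)
next
  case False
  then have "x \<notin> \<int>" by (simp add: frac_eq_0_iff)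
  then show ?thesis using False by (simp add: frac_neg)
qed

lemma Vr_reflect: assumes "0 < s" "s < 1" shows "Vr (1 - s) x = Vr s (- x)"
proof -
  have t: "0 \<le> frac x" "frac x < 1" by (auto simp: frac_lt_1)
  show ?thesis
  proof (cases "frac x = 0")
    case True
    have f: "frac (- x) = 0" using True by (simp add: frac_neg)
    show ?thesis unfolding Vr_def Let_def True f using assms by simp
  next
    case False
    have s01: "0 \<le> s" "s \<le> 1" "0 < s" "s < 1" using assms by auto
    show ?thesis
    proof (cases "frac x = 1 - s")
      case True
      then show ?thesis using False t s01 by (simp add: Vr_def Let_def frac_neg)
    next
      case False2: False
      then show ?thesis using False t s01 by (auto simp: Vr_def Let_def frac_neg)
    qed
  qed
qed

lemma C1_reflect:
  assumes "C1_fun \<phi>"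
  shows "C1_fun (\<lambda>y. \<phi> (- y)) \<and> (\<forall>y. deriv (\<lambda>y. \<phi> (- y)) y = - deriv \<phi> (- y))"
proof -
  have d: "((\<lambda>y. \<phi> (- y)) has_real_derivative - deriv \<phi> (- y)) (at y)" for y
    using C1_deriv[OF assms, of "-y"] DERIV_mirror by fastforce
  then have dd: "deriv (\<lambda>y. \<phi> (- y)) = (\<lambda>y. - deriv \<phi> (- y))"
    using DERIV_imp_deriv by blast
  have c: "continuous_on UNIV (deriv \<phi>)" using assms by (simp add: C1_fun_def)
  have "continuous_on UNIV (\<lambda>y. - deriv \<phi> (- y))"
    by (intro continuous_intros continuous_on_compose2[OF c]) auto
  then show ?thesis unfolding C1_fun_def dd
    using d by (auto simp: differentiable_on_def real_differentiable_def)
qed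

lemma reflect_sol:
  assumes s: "0 < s" "s < 1" and ev: "\<And>x. F (- x) = F x"
    and sol: "visc_sol F (Vr s) lam w" and per: "wper w p"
  shows "visc_sol F (Vr (1 - s)) lam (\<lambda>x. w (- x)) \<and> wper (\<lambda>x. w (- x)) (- p)"
proof
  have cw: "continuous_on UNIV w" using sol by (simp add: visc_sol_def visc_sub_def)
  have cw': "continuous_on UNIV (\<lambda>x. w (- x))"
    by (intro continuous_on_compose2[OF cw] continuous_intros) auto
  show "visc_sol F (Vr (1 - s)) lam (\<lambda>x. w (- x))"
    unfolding visc_sol_def visc_sub_def visc_super_def
  proof (intro conjI allI impI cw')
    fix \<phi> x assume \<phi>: "C1_fun \<phi>" and m: "\<exists>e>0. \<forall>y. \<bar>y - x\<bar> < e \<longrightarrow> w (- y) - \<phi> y \<le> w (- x) - \<phi> x"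
    note r = C1_reflect[OF \<phi>]
    from m obtain e where e: "e > 0" "\<And>y. \<bar>y - x\<bar> < e \<Longrightarrow> w (- y) - \<phi> y \<le> w (- x) - \<phi> x" by blast
    have "\<exists>e>0. \<forall>z. \<bar>z - (- x)\<bar> < e \<longrightarrow> w z - \<phi> (- z) \<le> w (- x) - \<phi> (- (- x))"
    proof (intro exI[of _ e] conjI allI impI e(1))
      fix z assume "\<bar>z - - x\<bar> < e"
      then have "\<bar>- z - x\<bar> < e" by linarith
      then show "w z - \<phi> (- z) \<le> w (- x) - \<phi> (- (- x))" using e(2)[of "- z"] by simp
    qed
    then have "F (deriv (\<lambda>y. \<phi> (- y)) (- x)) - Vr s (- x) \<le> lam"
      using sol r unfolding visc_sol_def visc_sub_def by blast
    then show "F (deriv \<phi> x) - Vr (1 - s) x \<le> lam" using r ev Vr_reflect[OF s] by simp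
  next
    fix \<phi> x assume \<phi>: "C1_fun \<phi>" and m: "\<exists>e>0. \<forall>y. \<bar>y - x\<bar> < e \<longrightarrow> w (- y) - \<phi> y \<ge> w (- x) - \<phi> x"
    note r = C1_reflect[OF \<phi>]
    from m obtain e where e: "e > 0" "\<And>y. \<bar>y - x\<bar> < e \<Longrightarrow> w (- y) - \<phi> y \<ge> w (- x) - \<phi> x" by blast
    have "\<exists>e>0. \<forall>z. \<bar>z - (- x)\<bar> < e \<longrightarrow> w z - \<phi> (- z) \<ge> w (- x) - \<phi> (- (- x))"
    proof (intro exI[of _ e] conjI allI impI e(1))
      fix z assume "\<bar>z - - x\<bar> < e"
      then have "\<bar>- z - x\<bar> < e" by linarith
      then show "w z - \<phi> (- z) \<ge> w (- x) - \<phi> (- (- x))" using e(2)[of "- z"] by simp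
    qed
    then have "lam \<le> F (deriv (\<lambda>y. \<phi> (- y)) (- x)) - Vr s (- x)"
      using sol r unfolding visc_sol_def visc_super_def by blast
    then show "lam \<le> F (deriv \<phi> x) - Vr (1 - s) x" using r ev Vr_reflect[OF s] by simp
  qed
  show "wper (\<lambda>x. w (- x)) (- p)"
    unfolding wper_def
  proof
    fix x :: real
    define y where "y = - x - 1"
    have hx: "- (x + 1) = y" "- x = y + 1" "x = - y - 1" by (simp_all add: y_def)
    have "w (y + 1) - p * (y + 1) = w y - p * y" using per unfolding wper_def by blast
    then show "w (- (x + 1)) - - p * (x + 1) = w (- x) - - p * x"
      unfolding hx(1) hx(2) by (simp add: hx(3) algebra_simps)
  qed
qed

lemma (in frame) frame_sol:
  assumes s: "0 < s" "s < 1"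
    and J1: "\<And>t. 0 < t \<Longrightarrow> t < 1 \<Longrightarrow> jumpok F (H (cntL T t) t) (H (cnt T t) t) (lam + Vt s t)"
    and J0: "jumpok F (H (cntL T 1) 1) (H (cnt T 0) 0) lam"
  shows "visc_sol F (Vr s) lam w" "wper w (W 1)"
proof -
  show "visc_sol F (Vr s) lam w"
  proof (rule visc_from_onesided[OF w_right w_left])
    fix x
    show "jumpok F (Lw x) (H (cnt T (frac x)) (frac x)) (lam + Vr s x)"
    proof (cases "frac x = 0")
      case True
      show ?thesis unfolding Lw_def Vr_Vt[OF s] True using J0 Vt01[OF s] by simp
    next
      case False
      then have "0 < frac x" "frac x < 1" by (auto simp: frac_lt_1 order_le_neq_trans)
      then show ?thesis using J1 False by (simp add: Lw_def Vr_Vt[OF s])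
    qed
  qed
  show "wper w (W 1)" using w_periodic by (simp add: wper_def)
qed


definition mkT :: "real \<Rightarrow> real \<Rightarrow> real \<Rightarrow> real \<Rightarrow> real \<Rightarrow> nat \<Rightarrow> real" where
  "mkT a b c d e i = (if i = 1 then a else if i = 2 then b else if i = 3 then c else if i = 4 then d else e)"

lemma cnt_mkT: "cnt (mkT a b c d e) t = (if a \<le> t then 1 else 0) + (if b \<le> t then 1 else 0)
   + (if c \<le> t then 1 else 0) + (if d \<le> t then 1 else 0) + (if e \<le> t then 1 else 0)"
  by (simp add: cnt_def mkT_def)
lemma cntL_mkT: "cntL (mkT a b c d e) t = (if a < t then 1 else 0) + (if b < t then 1 else 0)
   + (if c < t then 1 else 0) + (if d < t then 1 else 0) + (if e < t then 1 else 0)"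
  by (simp add: cntL_def mkT_def)
lemma srt_mkT: "srt (mkT a b c d e) \<longleftrightarrow> 0 \<le> a \<and> a \<le> b \<and> b \<le> c \<and> c \<le> d \<and> d \<le> e \<and> e \<le> 1"
  by (simp add: srt_def mkT_def)

lemma Vt_inc: "0 < s \<Longrightarrow> s < 1 \<Longrightarrow> t \<le> s \<Longrightarrow> Vt s t = t / s"
  by (simp add: Vt_def min_def divide_le_eq_1 le_divide_eq_1)
     (smt (verit, ccfv_threshold) divide_le_eq_1 le_divide_eq_1)
lemma Vt_dec: "0 < s \<Longrightarrow> s < 1 \<Longrightarrow> s \<le> t \<Longrightarrow> Vt s t = (1 - t) / (1 - s)"
  by (simp add: Vt_def min_def)
     (smt (verit, ccfv_threshold) divide_le_eq_1 le_divide_eq_1)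

lemma dvs: fixes s t c :: real assumes "0 < s"
  shows "(t / s < c) = (t < s * c)" "(t / s \<le> c) = (t \<le> s * c)"
    "(c < t / s) = (s * c < t)" "(c \<le> t / s) = (s * c \<le> t)"
  using assms by (auto simp: field_simps)

context HJ begin

lemma FP1: "1/3 \<le> v \<Longrightarrow> F (P1 v) = v \<and> F (- P1 v) = v"
  using psi1 P1 even by simp
lemma FP3: "0 \<le> v \<Longrightarrow> v \<le> 1/2 \<Longrightarrow> F (P3 v) = v \<and> F (- P3 v) = v"
  using psi3 P3 even by simp
lemma FP2: "1/3 \<le> v \<Longrightarrow> v \<le> 1/2 \<Longrightarrow> F (P2 v) = v \<and> F (- P2 v) = v"
  using psi2 P2 even by simp

lemma Pvals: "P3 (1/3) = \<theta>3" "P1 (1/3) = \<theta>1" "P3 (1/2) = \<theta>2" "P2 (1/2) = \<theta>2" "P2 (1/3) = \<theta>1"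
  "P3 0 = 0"
  using psi_vals P1 P2 P3 by auto

lemma P1ge: "\<theta>1 \<le> P1 v" using psi1[of "max (1/3) v"] by (simp add: P1_def)

lemma JK13: "jumpok F (P3 (1/3)) (P1 (1/3)) (1/3)"
  unfolding Pvals
proof (rule jumpok_up)
  show "\<theta>3 \<le> \<theta>1" using th by simp
  show "F \<theta>3 = 1/3" using vals by simp
  fix q assume "\<theta>3 \<le> q" "q \<le> \<theta>1"
  then show "1/3 \<le> F q" using FA[of "1/3" q] psi_vals th by auto
qed

lemma JK12: "jumpok F (P1 (1/2)) (P3 (1/2)) (1/2)"
proof (rule jumpok_down)
  show "P3 (1/2) \<le> P1 (1/2)" using Pvals P1ge[of "1/2"] th by simp
  show "F (P1 (1/2)) = 1/2" using FP1 by simp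
  fix q assume "P3 (1/2) \<le> q" "q \<le> P1 (1/2)"
  then show "F q \<le> 1/2" using FB[of "1/2" q] psi_vals th P1 Pvals by auto
qed

definition Hb :: "real \<Rightarrow> real \<Rightarrow> nat \<Rightarrow> real \<Rightarrow> real" where "Hb s lam i t = (if i = 0 then P3 (lam + Vt s t) else if i = 1 then P1 (lam + Vt s t)
   else P3 (lam + Vt s t))"
definition "Tb s lam = mkT (s * (1/3 - lam)) (1 - (1 - s) * (1/2 - lam)) 1 1 1"

lemma contPV: "continuous_on S (\<lambda>t. P1 (c + Vt s t))" "continuous_on S (\<lambda>t. P2 (c + Vt s t))"
  "continuous_on S (\<lambda>t. P3 (c + Vt s t))"
  by (intro continuous_on_compose2[OF contP1] continuous_on_compose2[OF contP2]
      continuous_on_compose2[OF contP3] continuous_intros continuous_on_subset[OF contVt]; simp)+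

lemma fam_b:
  assumes s: "0 < s" "s < 1" and l: "0 \<le> lam" "lam \<le> 1/3"
  shows "frame (Tb s lam) (Hb s lam)"
    "\<And>t. 0 < t \<Longrightarrow> t < 1 \<Longrightarrow> jumpok F (Hb s lam (cntL (Tb s lam) t) t) (Hb s lam (cnt (Tb s lam) t) t) (lam + Vt s t)"
    "jumpok F (Hb s lam (cntL (Tb s lam) 1) 1) (Hb s lam (cnt (Tb s lam) 0) 0) lam"
proof -
  define a where "a = s * (1/3 - lam)"
  define b where "b = 1 - (1 - s) * (1/2 - lam)"
  have a: "0 \<le> a" "a < s"
  proof -
    show "0 \<le> a" using s l by (simp add: a_def)
    have "s * (2/3 + lam) > 0" using s l by (intro mult_pos_pos) auto
    moreover have "s - a = s * (2/3 + lam)" by (simp add: a_def algebra_simps)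
    ultimately show "a < s" by linarith
  qed
  have b: "s < b" "b < 1"
  proof -
    have "(1 - s) * (1/2 + lam) > 0" using s l by (intro mult_pos_pos) auto
    moreover have "b - s = (1 - s) * (1/2 + lam)" by (simp add: b_def algebra_simps)
    ultimately show "s < b" by linarith
    have "(1 - s) * (1/2 - lam) > 0" using s l by (intro mult_pos_pos) auto
    then show "b < 1" by (simp add: b_def)
  qed
  have T: "Tb s lam = mkT a b 1 1 1" by (simp add: Tb_def a_def b_def)
  show "frame (Tb s lam) (Hb s lam)"
  proof -
    have "continuous_on {0..1} (Hb s lam i)" for i
    proof -
      consider "i = 0" | "i = 1" | "i \<noteq> 0" "i \<noteq> 1" by blast
      then show ?thesis
      proof cases
        case 1
        then have "Hb s lam i = (\<lambda>t. P3 (lam + Vt s t))" by (simp add: Hb_def fun_eq_iff)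
        then show ?thesis by (simp add: contPV)
      next
        case 2
        then have "Hb s lam i = (\<lambda>t. P1 (lam + Vt s t))" by (simp add: Hb_def fun_eq_iff)
        then show ?thesis by (simp add: contPV)
      next
        case 3
        then have "Hb s lam i = (\<lambda>t. P3 (lam + Vt s t))" by (simp add: Hb_def fun_eq_iff)
        then show ?thesis by (simp add: contPV)
      qed
    qed
    then show ?thesis unfolding frame_def T srt_mkT using a b by auto
  qed
  show "jumpok F (Hb s lam (cntL (Tb s lam) t) t) (Hb s lam (cnt (Tb s lam) t) t) (lam + Vt s t)"
    if t: "0 < t" "t < 1" for t
  proof -
    consider "t < a" | "t = a" | "a < t" "t < b" | "t = b" | "b < t" by linarith
    then show ?thesis
    proof cases
      case 1
      then have "Vt s t = t / s" using a s by (simp add: Vt_inc)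
      moreover have "t / s < 1/3 - lam" using 1 s by (simp add: dvs a_def)
      moreover have "0 \<le> t / s" using t s by simp
      ultimately show ?thesis using 1 a b l
        by (auto simp: T cnt_mkT cntL_mkT Hb_def intro!: jumpok_eq FP3[THEN conjunct1])
    next
      case 2
      then have "Vt s t = 1/3 - lam" using a s by (simp add: Vt_inc a_def)
      then show ?thesis using 2 a b t JK13 by (simp add: T cnt_mkT cntL_mkT Hb_def)
    next
      case 3
      have "1/3 \<le> lam + Vt s t"
      proof (cases "t \<le> s")
        case True
        have "1/3 - lam < t / s" using 3 s by (simp add: dvs a_def)
        moreover have "Vt s t = t / s" using True s by (simp add: Vt_inc)
        ultimately show ?thesis by linarith
      next
        case False
        then have "Vt s t = (1 - t) / (1 - s)" using s by (simp add: Vt_dec)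
        moreover have "1/2 - lam < (1 - t) / (1 - s)" using 3 s by (simp add: dvs b_def)
        ultimately show ?thesis by linarith
      qed
      then show ?thesis using 3 a b
        by (auto simp: T cnt_mkT cntL_mkT Hb_def intro!: jumpok_eq FP1[THEN conjunct1])
    next
      case 4
      then have "Vt s t = 1/2 - lam" using b s by (simp add: Vt_dec b_def)
      then show ?thesis using 4 a b t JK12 by (simp add: T cnt_mkT cntL_mkT Hb_def)
    next
      case 5
      then have "Vt s t = (1 - t) / (1 - s)" using s b by (simp add: Vt_dec)
      moreover have "(1 - t) / (1 - s) < 1/2 - lam" using 5 s by (simp add: dvs b_def)
      moreover have "0 \<le> (1 - t) / (1 - s)" using t s by simp
      ultimately have "0 \<le> lam + Vt s t" "lam + Vt s t \<le> 1/2" using l by linarith+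
      then have "F (P3 (lam + Vt s t)) = lam + Vt s t" using FP3 by blast
      then show ?thesis using 5 a b by (simp add: T cnt_mkT cntL_mkT Hb_def jumpok_eq)
    qed
  qed
  show "jumpok F (Hb s lam (cntL (Tb s lam) 1) 1) (Hb s lam (cnt (Tb s lam) 0) 0) lam"
  proof (cases "lam = 1/3")
    case True
    then have "a = 0" by (simp add: a_def)
    then show ?thesis unfolding T using b s JK13 by (simp add: cnt_mkT cntL_mkT Hb_def Vt01 True)
  next
    case False
    then have "a > 0" using s l by (simp add: a_def)
    then show ?thesis using a b s l by (auto simp: T cnt_mkT cntL_mkT Hb_def Vt01 intro!: jumpok_eq FP3[THEN conjunct1])
  qed
qed

end


context HJ begin

lemma P3_le: "0 \<le> P3 v" "P3 v \<le> \<theta>2"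
  using psi3[of "max 0 (min (1/2) v)"] by (auto simp: P3_def)
lemma P2_rng: "\<theta>2 \<le> P2 v" "P2 v \<le> \<theta>1"
  using psi2[of "max (1/3) (min (1/2) v)"] by (auto simp: P2_def)

lemma segP1: "1/3 \<le> v \<Longrightarrow> jumpok F (P1 v) (P1 v) v" using FP1 jumpok_eq by blast
lemma segP1n: "1/3 \<le> v \<Longrightarrow> jumpok F (- P1 v) (- P1 v) v" using FP1 jumpok_eq by blast
lemma segP3: "0 \<le> v \<Longrightarrow> v \<le> 1/2 \<Longrightarrow> jumpok F (P3 v) (P3 v) v" using FP3 jumpok_eq by blast
lemma segP3n: "0 \<le> v \<Longrightarrow> v \<le> 1/2 \<Longrightarrow> jumpok F (- P3 v) (- P3 v) v" using FP3 jumpok_eq by blast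
lemma segP2: "1/3 \<le> v \<Longrightarrow> v \<le> 1/2 \<Longrightarrow> jumpok F (P2 v) (P2 v) v" using FP2 jumpok_eq by blast
lemma segP2n: "1/3 \<le> v \<Longrightarrow> v \<le> 1/2 \<Longrightarrow> jumpok F (- P2 v) (- P2 v) v" using FP2 jumpok_eq by blast

lemma JK1n3: "jumpok F (P1 (1/2)) (- P3 (1/2)) (1/2)"
proof (rule jumpok_down)
  show "- P3 (1/2) \<le> P1 (1/2)" using P3_le[of "1/2"] P1ge[of "1/2"] th by simp
  show "F (P1 (1/2)) = 1/2" using FP1 by simp
  fix q assume q: "- P3 (1/2) \<le> q" "q \<le> P1 (1/2)"
  have "\<bar>q\<bar> \<le> \<psi>1 (1/2)" using q P3_le[of "1/2"] P1ge[of "1/2"] th P1[of "1/2"] by auto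
  then show "F q \<le> 1/2" using FD[of "1/2" q] by simp
qed

lemma JKflip3: assumes "0 \<le> v" "v \<le> 1/2" shows "jumpok F (P3 v) (- P3 v) v"
proof (rule jumpok_down)
  show "- P3 v \<le> P3 v" using P3_le[of v] by simp
  show "F (P3 v) = v" using FP3 assms by simp
  fix q assume q: "- P3 v \<le> q" "q \<le> P3 v"
  then have "\<bar>q\<bar> \<le> \<psi>3 v" using P3 assms by auto
  then show "F q \<le> v" using FC assms by simp
qed

lemma JKflip1: assumes "1/2 \<le> v" shows "jumpok F (P1 v) (- P1 v) v"
proof (rule jumpok_down)
  show "- P1 v \<le> P1 v" using P1ge[of v] th by simp
  show "F (P1 v) = v" using FP1 assms by simp
  fix q assume q: "- P1 v \<le> q" "q \<le> P1 v"
  then have "\<bar>q\<bar> \<le> \<psi>1 v" using P1 assms by auto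
  then show "F q \<le> v" using FD assms by simp
qed

lemma JK23: assumes "1/3 \<le> v" "v \<le> 1/2" shows "jumpok F (- P2 v) (- P3 v) v"
proof (rule jumpok_up)
  show "- P2 v \<le> - P3 v" using P3_le[of v] P2_rng[of v] by simp
  show "F (- P2 v) = v" using FP2 assms by simp
  fix q assume q: "- P2 v \<le> q" "q \<le> - P3 v"
  then have "\<psi>3 v \<le> \<bar>q\<bar>" "\<bar>q\<bar> \<le> \<psi>2 v" using P3 P2 assms P3_le[of v] by auto
  then show "v \<le> F q" using FA assms by simp
qed

lemma JK32: assumes "1/3 \<le> v" "v \<le> 1/2" shows "jumpok F (P3 v) (P2 v) v"
proof (rule jumpok_up)
  show "P3 v \<le> P2 v" using P3_le[of v] P2_rng[of v] by simp
  show "F (P3 v) = v" using FP3 assms by simp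
  fix q assume q: "P3 v \<le> q" "q \<le> P2 v"
  then have "\<psi>3 v \<le> \<bar>q\<bar>" "\<bar>q\<bar> \<le> \<psi>2 v" using P3 P2 assms P3_le[of v] by auto
  then show "v \<le> F q" using FA assms by simp
qed

lemma JK21: assumes "1/3 \<le> v" "v \<le> 1/2" shows "jumpok F (- P2 v) (- P1 v) v"
proof (rule jumpok_down)
  show "- P1 v \<le> - P2 v" using P1ge[of v] P2_rng[of v] by simp
  show "F (- P2 v) = v" using FP2 assms by simp
  fix q assume q: "- P1 v \<le> q" "q \<le> - P2 v"
  then have "\<psi>2 v \<le> \<bar>q\<bar>" "\<bar>q\<bar> \<le> \<psi>1 v" using P1 P2 assms P2_rng[of v] th by auto
  then show "F q \<le> v" using FB assms by simp
qed

lemma JK12': assumes "1/3 \<le> v" "v \<le> 1/2" shows "jumpok F (P1 v) (P2 v) v"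
proof (rule jumpok_down)
  show "P2 v \<le> P1 v" using P1ge[of v] P2_rng[of v] by simp
  show "F (P1 v) = v" using FP1 assms by simp
  fix q assume q: "P2 v \<le> q" "q \<le> P1 v"
  then have "\<psi>2 v \<le> \<bar>q\<bar>" "\<bar>q\<bar> \<le> \<psi>1 v" using P1 P2 assms P2_rng[of v] th by auto
  then show "F q \<le> v" using FB assms by simp
qed

lemma JK13n: "jumpok F (- P1 (1/3)) (- P3 (1/3)) (1/3)"
  using JK23[of "1/3"] Pvals by simp

lemma Vt_nonneg: "0 < s \<Longrightarrow> s < 1 \<Longrightarrow> 0 \<le> t \<Longrightarrow> t \<le> 1 \<Longrightarrow> 0 \<le> Vt s t"
  by (simp add: Vt_def)

definition Ha :: "real \<Rightarrow> nat \<Rightarrow> real \<Rightarrow> real" where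
  "Ha s i t = (if i = 0 then P3 (Vt s t) else if i = 1 then P1 (Vt s t) else if i = 2 then P3 (Vt s t)
     else if i = 3 then - P2 (Vt s t) else if i = 4 then - P1 (Vt s t) else - P3 (Vt s t))"

lemma contPV0: "continuous_on S (\<lambda>t. P1 (Vt s t))" "continuous_on S (\<lambda>t. P2 (Vt s t))"
  "continuous_on S (\<lambda>t. P3 (Vt s t))"
  using contPV[of S 0 s] by simp_all

lemma Ha_cont: "continuous_on {0..1} (Ha s i)"
proof -
  have e: "Ha s i = (if i = 0 then (\<lambda>t. P3 (0 + Vt s t)) else if i = 1 then (\<lambda>t. P1 (0 + Vt s t))
     else if i = 2 then (\<lambda>t. P3 (0 + Vt s t))
     else if i = 3 then (\<lambda>t. - P2 (0 + Vt s t)) else if i = 4 then (\<lambda>t. - P1 (0 + Vt s t))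
     else (\<lambda>t. - P3 (0 + Vt s t)))" by (auto simp: Ha_def fun_eq_iff)
  show ?thesis unfolding e by (auto intro!: contPV0 continuous_intros)
qed

lemma stage_low:
  assumes s: "0 < s" "s < 1" and t: "0 < t" "t < 1"
    and T1: "T 1 = s / 3" and Tm: "T 2 \<le> T 3" "T 3 \<le> T 4" "T 4 \<le> T 5"
    and low: "t < (1 + s) / 2" "t < T 2"
  shows "jumpok F (Ha s (cntL T t) t) (Ha s (cnt T t) t) (0 + Vt s t)"
proof -
  consider "t < s / 3" | "t = s / 3" | "s / 3 < t" by linarith
  then show ?thesis
  proof cases
    case 1
    have c: "cnt T t = 0" "cntL T t = 0" using 1 T1 Tm low by (auto simp: cnt_def cntL_def)
    have "Vt s t = t / s" using 1 s by (simp add: Vt_inc)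
    moreover have "t / s < 1/3" using 1 s by (simp add: dvs)
    moreover have "0 \<le> t / s" using t s by simp
    ultimately show ?thesis using c segP3[of "Vt s t"] by (simp add: Ha_def)
  next
    case 2
    have c: "cnt T t = 1" "cntL T t = 0" using 2 T1 Tm low s by (auto simp: cnt_def cntL_def)
    have v: "Vt s t = 1/3" using 2 s by (simp add: Vt_inc)
    show ?thesis using c JK13 by (simp add: Ha_def v)
  next
    case 3
    have c: "cnt T t = 1" "cntL T t = 1" using 3 T1 Tm low by (auto simp: cnt_def cntL_def)
    have "1/3 \<le> Vt s t"
    proof (cases "t \<le> s")
      case True
      have "1/3 < t / s" using 3 s by (simp add: dvs)
      moreover have "Vt s t = t / s" using True s by (simp add: Vt_inc)
      ultimately show ?thesis by linarith
    next
      case False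
      then have "Vt s t = (1 - t) / (1 - s)" using s by (simp add: Vt_dec)
      moreover have "1/2 < (1 - t) / (1 - s)" using low s by (simp add: dvs algebra_simps)
      ultimately show ?thesis by linarith
    qed
    then show ?thesis using c segP1[of "Vt s t"] by (simp add: Ha_def)
  qed
qed

lemma stageA:
  assumes s: "0 < s" "s < 1" and X: "(1 + s) / 2 \<le> X" "X \<le> 1"
  defines "T \<equiv> mkT (s / 3) ((1 + s) / 2) X X X"
  shows "frame T (Ha s)"
    "\<And>t. 0 < t \<Longrightarrow> t < 1 \<Longrightarrow> jumpok F (Ha s (cntL T t) t) (Ha s (cnt T t) t) (0 + Vt s t)"
    "jumpok F (Ha s (cntL T 1) 1) (Ha s (cnt T 0) 0) 0"
proof -
  define m where "m = (1 + s) / 2"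
  have m: "s < m" "m < 1" "s / 3 < m" "0 < s / 3" using s by (auto simp: m_def)
  have Tv: "T 1 = s / 3" "T 2 = m" "T 3 = X" "T 4 = X" "T 5 = X" by (simp_all add: T_def mkT_def m_def)
  show "frame T (Ha s)" unfolding frame_def T_def srt_mkT using m X Ha_cont by (auto simp: m_def)
  show "jumpok F (Ha s (cntL T t) t) (Ha s (cnt T t) t) (0 + Vt s t)" if t: "0 < t" "t < 1" for t
  proof -
    consider "t < m" | "t = m" | "m < t" "t < X" | "m < X" "t = X" | "X < t" using X by (force simp: m_def)
    then show ?thesis
    proof cases
      case 1
      then show ?thesis using stage_low[OF s t, of T] Tv X by (simp add: m_def)
    next
      case 2
      have v: "Vt s t = 1/2" using 2 s m by (simp add: Vt_dec m_def field_simps)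
      show ?thesis
      proof (cases "m < X")
        case True
        have c: "cnt T t = 2" "cntL T t = 1" using 2 True m Tv by (auto simp: cnt_def cntL_def)
        then show ?thesis using JK12 by (simp add: Ha_def v)
      next
        case False
        then have "X = m" using X by (simp add: m_def)
        then have c: "cnt T t = 5" "cntL T t = 1" using 2 m Tv by (auto simp: cnt_def cntL_def)
        then show ?thesis using JK1n3 by (simp add: Ha_def v)
      qed
    next
      case 3
      have c: "cnt T t = 2" "cntL T t = 2" using 3 m Tv by (auto simp: cnt_def cntL_def)
      have "Vt s t = (1 - t) / (1 - s)" using 3 s m by (simp add: Vt_dec)
      moreover have "(1 - t) / (1 - s) < 1/2" using 3 s by (simp add: dvs m_def algebra_simps)
      moreover have "0 \<le> (1 - t) / (1 - s)" using t s by simp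
      ultimately have "0 \<le> Vt s t" "Vt s t \<le> 1/2" by linarith+
      then show ?thesis using c segP3[of "Vt s t"] by (simp add: Ha_def)
    next
      case 4
      have c: "cnt T t = 5" "cntL T t = 2" using 4 m Tv by (auto simp: cnt_def cntL_def)
      have "Vt s t = (1 - t) / (1 - s)" using 4 s m by (simp add: Vt_dec)
      moreover have "(1 - t) / (1 - s) < 1/2" using 4 s by (simp add: dvs m_def algebra_simps)
      moreover have "0 \<le> (1 - t) / (1 - s)" using t s by simp
      ultimately have "0 \<le> Vt s t" "Vt s t \<le> 1/2" by linarith+
      then show ?thesis using c JKflip3[of "Vt s t"] by (simp add: Ha_def)
    next
      case 5
      have mX: "m \<le> X" using X by (simp add: m_def)
      have c: "cnt T t = 5" "cntL T t = 5" using 5 m Tv mX by (auto simp: cnt_def cntL_def)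
      have "Vt s t = (1 - t) / (1 - s)" using 5 X s m by (simp add: Vt_dec)
      moreover have "(1 - t) / (1 - s) < 1/2" using 5 X s by (simp add: dvs m_def algebra_simps)
      moreover have "0 \<le> (1 - t) / (1 - s)" using t s by simp
      ultimately have "0 \<le> Vt s t" "Vt s t \<le> 1/2" by linarith+
      then show ?thesis using c segP3n[of "Vt s t"] by (simp add: Ha_def)
    qed
  qed
  have c0: "cnt T 0 = 0" using m X Tv by (auto simp: cnt_def)
  have cl: "cntL T 1 = 2 \<or> cntL T 1 = 5"
  proof (cases "X < 1")
    case True then show ?thesis using m Tv by (simp add: cntL_def)
  next
    case False then show ?thesis using m Tv X by (simp add: cntL_def)
  qed
  have "Ha s (cntL T 1) 1 = 0" using cl Vt01[OF s] Pvals by (auto simp: Ha_def)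
  moreover have "Ha s (cnt T 0) 0 = 0" using c0 Vt01[OF s] Pvals by (simp add: Ha_def)
  moreover have "jumpok F 0 0 0" using jumpok_eq[of F 0 0] vals by simp
  ultimately show "jumpok F (Ha s (cntL T 1) 1) (Ha s (cnt T 0) 0) 0" by simp
qed

lemma J0a:
  assumes s: "0 < s" "s < 1" and c: "cnt T 0 = 0" "cntL T 1 = 5"
  shows "jumpok F (Ha s (cntL T 1) 1) (Ha s (cnt T 0) 0) 0"
proof -
  have "Ha s (cntL T 1) 1 = 0" using c Vt01[OF s] Pvals by (auto simp: Ha_def)
  moreover have "Ha s (cnt T 0) 0 = 0" using c Vt01[OF s] Pvals by (simp add: Ha_def)
  moreover have "jumpok F 0 0 0" using jumpok_eq[of F 0 0] vals by simp
  ultimately show ?thesis by simp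
qed

end


context HJ begin

lemma JK1n2: "jumpok F (P1 (1/2)) (- P2 (1/2)) (1/2)"
  using JK1n3 Pvals by simp

lemma stageB:
  assumes s: "0 < s" "s < 1" and Y: "(1 + s) / 2 \<le> Y" "Y \<le> (2 + s) / 3"
  defines "T \<equiv> mkT (s / 3) ((1 + s) / 2) ((1 + s) / 2) Y Y"
  shows "frame T (Ha s)"
    "\<And>t. 0 < t \<Longrightarrow> t < 1 \<Longrightarrow> jumpok F (Ha s (cntL T t) t) (Ha s (cnt T t) t) (0 + Vt s t)"
    "jumpok F (Ha s (cntL T 1) 1) (Ha s (cnt T 0) 0) 0"
proof -
  define m where "m = (1 + s) / 2"
  define n where "n = (2 + s) / 3"
  have m: "s < m" "m < 1" "s / 3 < m" "0 < s / 3" "m < n" "n < 1" using s by (auto simp: m_def n_def)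
  have Y': "m \<le> Y" "Y \<le> n" using Y by (simp_all add: m_def n_def)
  have Tv: "T 1 = s / 3" "T 2 = m" "T 3 = m" "T 4 = Y" "T 5 = Y" by (simp_all add: T_def mkT_def m_def)
  show "frame T (Ha s)" unfolding frame_def T_def srt_mkT using m Y' Ha_cont by (auto simp: m_def)
  show "jumpok F (Ha s (cntL T t) t) (Ha s (cnt T t) t) (0 + Vt s t)" if t: "0 < t" "t < 1" for t
  proof -
    consider "t < m" | "t = m" | "m < t" "t < Y" | "m < Y" "t = Y" | "Y < t" using Y' by force
    then show ?thesis
    proof cases
      case 1
      then show ?thesis using stage_low[OF s t, of T] Tv Y' by (simp add: m_def)
    next
      case 2
      have v: "Vt s t = 1/2" using 2 s m by (simp add: Vt_dec m_def field_simps)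
      show ?thesis
      proof (cases "m < Y")
        case True
        have c: "cnt T t = 3" "cntL T t = 1" using 2 True m Tv by (auto simp: cnt_def cntL_def)
        then show ?thesis using JK1n2 by (simp add: Ha_def v)
      next
        case False
        then have "Y = m" using Y' by simp
        then have c: "cnt T t = 5" "cntL T t = 1" using 2 m Tv by (auto simp: cnt_def cntL_def)
        then show ?thesis using JK1n3 by (simp add: Ha_def v)
      qed
    next
      case 3
      have c: "cnt T t = 3" "cntL T t = 3" using 3 m Tv by (auto simp: cnt_def cntL_def)
      have "Vt s t = (1 - t) / (1 - s)" using 3 s m by (simp add: Vt_dec)
      moreover have "(1 - t) / (1 - s) < 1/2" using 3 s by (simp add: dvs m_def algebra_simps)
      moreover have "1/3 < (1 - t) / (1 - s)" using 3 Y' s by (simp add: dvs n_def algebra_simps)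
      ultimately have "1/3 \<le> Vt s t" "Vt s t \<le> 1/2" by linarith+
      then show ?thesis using c segP2n[of "Vt s t"] by (simp add: Ha_def)
    next
      case 4
      have c: "cnt T t = 5" "cntL T t = 3" using 4 m Tv by (auto simp: cnt_def cntL_def)
      have "Vt s t = (1 - t) / (1 - s)" using 4 s m by (simp add: Vt_dec)
      moreover have "(1 - t) / (1 - s) < 1/2" using 4 s by (simp add: dvs m_def algebra_simps)
      moreover have "1/3 \<le> (1 - t) / (1 - s)" using 4 Y' s by (simp add: dvs n_def algebra_simps)
      ultimately have "1/3 \<le> Vt s t" "Vt s t \<le> 1/2" by linarith+
      then show ?thesis using c JK23[of "Vt s t"] by (simp add: Ha_def)
    next
      case 5
      have c: "cnt T t = 5" "cntL T t = 5" using 5 m Tv Y' by (auto simp: cnt_def cntL_def)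
      have "Vt s t = (1 - t) / (1 - s)" using 5 Y' s m by (simp add: Vt_dec)
      moreover have "(1 - t) / (1 - s) < 1/2" using 5 Y' s by (simp add: dvs m_def algebra_simps)
      moreover have "0 \<le> (1 - t) / (1 - s)" using t s by simp
      ultimately have "0 \<le> Vt s t" "Vt s t \<le> 1/2" by linarith+
      then show ?thesis using c segP3n[of "Vt s t"] by (simp add: Ha_def)
    qed
  qed
  have c0: "cnt T 0 = 0" "cntL T 1 = 5" using m Y' Tv by (auto simp: cnt_def cntL_def)
  then show "jumpok F (Ha s (cntL T 1) 1) (Ha s (cnt T 0) 0) 0" by (rule J0a[OF s])
qed

lemma stageC:
  assumes s: "0 < s" "s < 1" and Z: "(1 + s) / 2 \<le> Z" "Z \<le> (2 + s) / 3"
  defines "T \<equiv> mkT (s / 3) ((1 + s) / 2) ((1 + s) / 2) Z ((2 + s) / 3)"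
  shows "frame T (Ha s)"
    "\<And>t. 0 < t \<Longrightarrow> t < 1 \<Longrightarrow> jumpok F (Ha s (cntL T t) t) (Ha s (cnt T t) t) (0 + Vt s t)"
    "jumpok F (Ha s (cntL T 1) 1) (Ha s (cnt T 0) 0) 0"
proof -
  define m where "m = (1 + s) / 2"
  define n where "n = (2 + s) / 3"
  have m: "s < m" "m < 1" "s / 3 < m" "0 < s / 3" "m < n" "n < 1" using s by (auto simp: m_def n_def)
  have Z': "m \<le> Z" "Z \<le> n" using Z by (simp_all add: m_def n_def)
  have Tv: "T 1 = s / 3" "T 2 = m" "T 3 = m" "T 4 = Z" "T 5 = n" by (simp_all add: T_def mkT_def m_def n_def)
  have vn: "Vt s n = 1/3" using s m by (simp add: Vt_dec n_def field_simps)
  show "frame T (Ha s)" unfolding frame_def T_def srt_mkT using m Z' Ha_cont by (auto simp: m_def n_def)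
  show "jumpok F (Ha s (cntL T t) t) (Ha s (cnt T t) t) (0 + Vt s t)" if t: "0 < t" "t < 1" for t
  proof -
    consider "t < m" | "t = m" | "m < t" "t < Z" | "m < Z" "t = Z" | "Z < t" "t < n" | "Z < n" "t = n"
      | "n < t" using Z' by force
    then show ?thesis
    proof cases
      case 1
      then show ?thesis using stage_low[OF s t, of T] Tv Z' m by (simp add: m_def)
    next
      case 2
      have v: "Vt s t = 1/2" using 2 s m by (simp add: Vt_dec m_def field_simps)
      show ?thesis
      proof (cases "m < Z")
        case True
        have c: "cnt T t = 3" "cntL T t = 1" using 2 True m Tv by (auto simp: cnt_def cntL_def)
        then show ?thesis using JK1n2 by (simp add: Ha_def v)
      next
        case False
        then have "Z = m" using Z' by simp
        then have c: "cnt T t = 4" "cntL T t = 1" using 2 m Tv by (auto simp: cnt_def cntL_def)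
        then show ?thesis using JKflip1[of "1/2"] by (simp add: Ha_def v)
      qed
    next
      case 3
      have c: "cnt T t = 3" "cntL T t = 3" using 3 m Tv Z' by (auto simp: cnt_def cntL_def)
      have "Vt s t = (1 - t) / (1 - s)" using 3 s m by (simp add: Vt_dec)
      moreover have "(1 - t) / (1 - s) < 1/2" using 3 s by (simp add: dvs m_def algebra_simps)
      moreover have "1/3 < (1 - t) / (1 - s)" using 3 Z' s by (simp add: dvs n_def algebra_simps)
      ultimately have "1/3 \<le> Vt s t" "Vt s t \<le> 1/2" by linarith+
      then show ?thesis using c segP2n[of "Vt s t"] by (simp add: Ha_def)
    next
      case 4
      have "Vt s t = (1 - t) / (1 - s)" using 4 s m by (simp add: Vt_dec)
      moreover have "(1 - t) / (1 - s) < 1/2" using 4 s by (simp add: dvs m_def algebra_simps)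
      moreover have "1/3 \<le> (1 - t) / (1 - s)" using 4 Z' s by (simp add: dvs n_def algebra_simps)
      ultimately have vv: "1/3 \<le> Vt s t" "Vt s t \<le> 1/2" by linarith+
      show ?thesis
      proof (cases "Z < n")
        case True
        have c: "cnt T t = 4" "cntL T t = 3" using 4 True m Tv by (auto simp: cnt_def cntL_def)
        then show ?thesis using vv JK21[of "Vt s t"] by (simp add: Ha_def)
      next
        case False
        then have "Z = n" using Z' by simp
        then have c: "cnt T t = 5" "cntL T t = 3" using 4 m Tv by (auto simp: cnt_def cntL_def)
        then show ?thesis using vv JK23[of "Vt s t"] by (simp add: Ha_def)
      qed
    next
      case 5
      have c: "cnt T t = 4" "cntL T t = 4" using 5 m Tv Z' by (auto simp: cnt_def cntL_def)
      have "Vt s t = (1 - t) / (1 - s)" using 5 Z' s m by (simp add: Vt_dec)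
      moreover have "1/3 < (1 - t) / (1 - s)" using 5 s by (simp add: dvs n_def algebra_simps)
      ultimately have "1/3 \<le> Vt s t" by linarith
      then show ?thesis using c segP1n[of "Vt s t"] by (simp add: Ha_def)
    next
      case 6
      have c: "cnt T t = 5" "cntL T t = 4" using 6 m Tv Z' by (auto simp: cnt_def cntL_def)
      show ?thesis using c JK13n by (simp add: Ha_def vn 6(2))
    next
      case 7
      have c: "cnt T t = 5" "cntL T t = 5" using 7 m Tv Z' by (auto simp: cnt_def cntL_def)
      have "Vt s t = (1 - t) / (1 - s)" using 7 s m by (simp add: Vt_dec)
      moreover have "(1 - t) / (1 - s) < 1/3" using 7 s by (simp add: dvs n_def algebra_simps)
      moreover have "0 \<le> (1 - t) / (1 - s)" using t s by simp
      ultimately have "0 \<le> Vt s t" "Vt s t \<le> 1/2" by linarith+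
      then show ?thesis using c segP3n[of "Vt s t"] by (simp add: Ha_def)
    qed
  qed
  have c0: "cnt T 0 = 0" "cntL T 1 = 5" using m Z' Tv by (auto simp: cnt_def cntL_def)
  then show "jumpok F (Ha s (cntL T 1) 1) (Ha s (cnt T 0) 0) 0" by (rule J0a[OF s])
qed

lemma stageD:
  assumes s: "0 < s" "s < 1" and Q: "s / 2 \<le> Q" "Q \<le> (1 + s) / 2"
  defines "T \<equiv> mkT (s / 3) Q Q Q ((2 + s) / 3)"
  shows "frame T (Ha s)"
    "\<And>t. 0 < t \<Longrightarrow> t < 1 \<Longrightarrow> jumpok F (Ha s (cntL T t) t) (Ha s (cnt T t) t) (0 + Vt s t)"
    "jumpok F (Ha s (cntL T 1) 1) (Ha s (cnt T 0) 0) 0"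
proof -
  define m where "m = (1 + s) / 2"
  define n where "n = (2 + s) / 3"
  have m: "s < m" "m < 1" "s / 3 < m" "0 < s / 3" "m < n" "n < 1" "s / 3 < s / 2" using s by (auto simp: m_def n_def)
  have Q': "s / 2 \<le> Q" "Q \<le> m" using Q by (simp_all add: m_def)
  have Tv: "T 1 = s / 3" "T 2 = Q" "T 3 = Q" "T 4 = Q" "T 5 = n" by (simp_all add: T_def mkT_def n_def)
  have vn: "Vt s n = 1/3" using s m by (simp add: Vt_dec n_def field_simps)
  show "frame T (Ha s)" unfolding frame_def T_def srt_mkT using m Q' Ha_cont by (auto simp: m_def n_def)
  show "jumpok F (Ha s (cntL T t) t) (Ha s (cnt T t) t) (0 + Vt s t)" if t: "0 < t" "t < 1" for t
  proof -
    consider "t < Q" | "t = Q" | "Q < t" "t < n" | "t = n" | "n < t" using Q' m by force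
    then show ?thesis
    proof cases
      case 1
      then show ?thesis using stage_low[OF s t, of T] Tv Q' m by (simp add: m_def)
    next
      case 2
      have "1/2 \<le> Vt s t"
      proof (cases "t \<le> s")
        case True
        have "1/2 \<le> t / s" using 2 Q' s by (simp add: dvs)
        moreover have "Vt s t = t / s" using True s by (simp add: Vt_inc)
        ultimately show ?thesis by linarith
      next
        case False
        then have "Vt s t = (1 - t) / (1 - s)" using s by (simp add: Vt_dec)
        moreover have "1/2 \<le> (1 - t) / (1 - s)" using 2 Q' s by (simp add: dvs m_def algebra_simps)
        ultimately show ?thesis by linarith
      qed
      moreover have c: "cnt T t = 4" "cntL T t = 1" using 2 m Q' Tv by (auto simp: cnt_def cntL_def)
      ultimately show ?thesis using JKflip1[of "Vt s t"] by (simp add: Ha_def)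
    next
      case 3
      have c: "cnt T t = 4" "cntL T t = 4" using 3 m Tv Q' by (auto simp: cnt_def cntL_def)
      have "1/3 \<le> Vt s t"
      proof (cases "t \<le> s")
        case True
        have "1/2 \<le> t / s" using 3 Q' s by (simp add: dvs)
        moreover have "Vt s t = t / s" using True s by (simp add: Vt_inc)
        ultimately show ?thesis by linarith
      next
        case False
        then have "Vt s t = (1 - t) / (1 - s)" using s by (simp add: Vt_dec)
        moreover have "1/3 < (1 - t) / (1 - s)" using 3 s by (simp add: dvs n_def algebra_simps)
        ultimately show ?thesis by linarith
      qed
      then show ?thesis using c segP1n[of "Vt s t"] by (simp add: Ha_def)
    next
      case 4
      have c: "cnt T t = 5" "cntL T t = 4" using 4 m Tv Q' by (auto simp: cnt_def cntL_def)
      show ?thesis using c JK13n by (simp add: Ha_def vn 4)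
    next
      case 5
      have c: "cnt T t = 5" "cntL T t = 5" using 5 m Tv Q' by (auto simp: cnt_def cntL_def)
      have "Vt s t = (1 - t) / (1 - s)" using 5 s m by (simp add: Vt_dec)
      moreover have "(1 - t) / (1 - s) < 1/3" using 5 s by (simp add: dvs n_def algebra_simps)
      moreover have "0 \<le> (1 - t) / (1 - s)" using t s by simp
      ultimately have "0 \<le> Vt s t" "Vt s t \<le> 1/2" by linarith+
      then show ?thesis using c segP3n[of "Vt s t"] by (simp add: Ha_def)
    qed
  qed
  have c0: "cnt T 0 = 0" "cntL T 1 = 5" using m Q' Tv by (auto simp: cnt_def cntL_def)
  then show "jumpok F (Ha s (cntL T 1) 1) (Ha s (cnt T 0) 0) 0" by (rule J0a[OF s])
qed

definition Hc :: "real \<Rightarrow> nat \<Rightarrow> real \<Rightarrow> real" where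
  "Hc s i t = (if i = 0 then P1 (1/3 + Vt s t) else if i = 1 then P3 (1/3 + Vt s t) else P2 (1/3 + Vt s t))"

lemma Hc_cont: "continuous_on {0..1} (Hc s i)"
proof -
  have e: "Hc s i = (if i = 0 then (\<lambda>t. P1 (1/3 + Vt s t)) else if i = 1 then (\<lambda>t. P3 (1/3 + Vt s t))
     else (\<lambda>t. P2 (1/3 + Vt s t)))" by (auto simp: Hc_def fun_eq_iff)
  show ?thesis unfolding e by (auto intro!: contPV)
qed

lemma stage_c_low:
  assumes s: "0 < s" "s < 1" and t: "0 < t" "t < 1" and c: "cnt T t = 0" "cntL T t = 0"
  shows "jumpok F (Hc s (cntL T t) t) (Hc s (cnt T t) t) (1/3 + Vt s t)"
  using c segP1[of "1/3 + Vt s t"] Vt_nonneg[OF s, of t] t by (simp add: Hc_def)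

lemma stageC1:
  assumes s: "0 < s" "s < 1" and Y: "(5 + s) / 6 \<le> Y" "Y \<le> 1"
  defines "T \<equiv> mkT ((5 + s) / 6) Y 1 1 1"
  shows "frame T (Hc s)"
    "\<And>t. 0 < t \<Longrightarrow> t < 1 \<Longrightarrow> jumpok F (Hc s (cntL T t) t) (Hc s (cnt T t) t) (1/3 + Vt s t)"
    "jumpok F (Hc s (cntL T 1) 1) (Hc s (cnt T 0) 0) (1/3)"
proof -
  define m where "m = (5 + s) / 6"
  have m: "s < m" "m < 1" "0 < m" using s by (auto simp: m_def)
  have Y': "m \<le> Y" "Y \<le> 1" using Y by (simp_all add: m_def)
  have Tv: "T 1 = m" "T 2 = Y" "T 3 = 1" "T 4 = 1" "T 5 = 1" by (simp_all add: T_def mkT_def m_def)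
  show "frame T (Hc s)" unfolding frame_def T_def srt_mkT using m Y' Hc_cont by (auto simp: m_def)
  show "jumpok F (Hc s (cntL T t) t) (Hc s (cnt T t) t) (1/3 + Vt s t)" if t: "0 < t" "t < 1" for t
  proof -
    consider "t < m" | "t = m" | "m < t" "t < Y" | "m < Y" "t = Y" | "Y < t" using Y' by force
    then show ?thesis
    proof cases
      case 1
      have "cnt T t = 0" "cntL T t = 0" using 1 m Y' Tv t by (auto simp: cnt_def cntL_def)
      then show ?thesis by (rule stage_c_low[OF s t])
    next
      case 2
      have v: "1/3 + Vt s t = 1/2" using 2 s m by (simp add: Vt_dec m_def field_simps)
      show ?thesis
      proof (cases "m < Y")
        case True
        have c: "cnt T t = 1" "cntL T t = 0" using 2 True m Tv by (auto simp: cnt_def cntL_def)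
        then show ?thesis using JK12 by (simp add: Hc_def v)
      next
        case False
        then have "Y = m" using Y' by simp
        then have c: "cnt T t = 2" "cntL T t = 0" using 2 m Tv by (auto simp: cnt_def cntL_def)
        then show ?thesis using JK12 Pvals by (simp add: Hc_def v)
      qed
    next
      case 3
      have c: "cnt T t = 1" "cntL T t = 1" using 3 m Tv t by (auto simp: cnt_def cntL_def)
      have "Vt s t = (1 - t) / (1 - s)" using 3 s m by (simp add: Vt_dec)
      moreover have "(1 - t) / (1 - s) < 1/6" using 3 s by (simp add: dvs m_def algebra_simps)
      moreover have "0 \<le> (1 - t) / (1 - s)" using t s by simp
      ultimately have "0 \<le> 1/3 + Vt s t" "1/3 + Vt s t \<le> 1/2" by linarith+
      then show ?thesis using c segP3[of "1/3 + Vt s t"] by (simp add: Hc_def)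
    next
      case 4
      have c: "cnt T t = 2" "cntL T t = 1" using 4 m Tv t by (auto simp: cnt_def cntL_def)
      have "Vt s t = (1 - t) / (1 - s)" using 4 s m by (simp add: Vt_dec)
      moreover have "(1 - t) / (1 - s) < 1/6" using 4 s by (simp add: dvs m_def algebra_simps)
      moreover have "0 \<le> (1 - t) / (1 - s)" using t s by simp
      ultimately have "1/3 \<le> 1/3 + Vt s t" "1/3 + Vt s t \<le> 1/2" by linarith+
      then show ?thesis using c JK32[of "1/3 + Vt s t"] by (simp add: Hc_def)
    next
      case 5
      have c: "cnt T t = 2" "cntL T t = 2" using 5 m Tv t Y' by (auto simp: cnt_def cntL_def)
      have "Vt s t = (1 - t) / (1 - s)" using 5 Y' s m by (simp add: Vt_dec)
      moreover have "(1 - t) / (1 - s) < 1/6" using 5 Y' s by (simp add: dvs m_def algebra_simps)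
      moreover have "0 \<le> (1 - t) / (1 - s)" using t s by simp
      ultimately have "1/3 \<le> 1/3 + Vt s t" "1/3 + Vt s t \<le> 1/2" by linarith+
      then show ?thesis using c segP2[of "1/3 + Vt s t"] by (simp add: Hc_def)
    qed
  qed
  have c0: "cnt T 0 = 0" using m Y' Tv by (auto simp: cnt_def)
  show "jumpok F (Hc s (cntL T 1) 1) (Hc s (cnt T 0) 0) (1/3)"
  proof (cases "Y < 1")
    case True
    then have "cntL T 1 = 2" using m Tv by (simp add: cntL_def)
    then show ?thesis using c0 Vt01[OF s] Pvals jumpok_eq[of F \<theta>1] vals by (simp add: Hc_def)
  next
    case False
    then have "cntL T 1 = 1" using m Tv Y' by (simp add: cntL_def)
    then show ?thesis using c0 Vt01[OF s] JK13 by (simp add: Hc_def)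
  qed
qed

lemma stageC2:
  assumes s: "0 < s" "s < 1" and Y: "(5 + s) / 6 \<le> Y" "Y \<le> 1"
  defines "T \<equiv> mkT Y Y 1 1 1"
  shows "frame T (Hc s)"
    "\<And>t. 0 < t \<Longrightarrow> t < 1 \<Longrightarrow> jumpok F (Hc s (cntL T t) t) (Hc s (cnt T t) t) (1/3 + Vt s t)"
    "jumpok F (Hc s (cntL T 1) 1) (Hc s (cnt T 0) 0) (1/3)"
proof -
  define m where "m = (5 + s) / 6"
  have m: "s < m" "m < 1" "0 < m" using s by (auto simp: m_def)
  have Y': "m \<le> Y" "Y \<le> 1" using Y by (simp_all add: m_def)
  have Tv: "T 1 = Y" "T 2 = Y" "T 3 = 1" "T 4 = 1" "T 5 = 1" by (simp_all add: T_def mkT_def)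
  show "frame T (Hc s)" unfolding frame_def T_def srt_mkT using m Y' Hc_cont by (auto simp: m_def)
  show "jumpok F (Hc s (cntL T t) t) (Hc s (cnt T t) t) (1/3 + Vt s t)" if t: "0 < t" "t < 1" for t
  proof -
    consider "t < Y" | "t = Y" | "Y < t" by force
    then show ?thesis
    proof cases
      case 1
      have "cnt T t = 0" "cntL T t = 0" using 1 m Y' Tv t by (auto simp: cnt_def cntL_def)
      then show ?thesis by (rule stage_c_low[OF s t])
    next
      case 2
      have c: "cnt T t = 2" "cntL T t = 0" using 2 m Tv t by (auto simp: cnt_def cntL_def)
      have "Vt s t = (1 - t) / (1 - s)" using 2 Y' s m by (simp add: Vt_dec)
      moreover have "(1 - t) / (1 - s) \<le> 1/6" using 2 Y' s by (simp add: dvs m_def algebra_simps)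
      moreover have "0 \<le> (1 - t) / (1 - s)" using t s by simp
      ultimately have "1/3 \<le> 1/3 + Vt s t" "1/3 + Vt s t \<le> 1/2" by linarith+
      then show ?thesis using c JK12'[of "1/3 + Vt s t"] by (simp add: Hc_def)
    next
      case 3
      have c: "cnt T t = 2" "cntL T t = 2" using 3 m Tv t Y' by (auto simp: cnt_def cntL_def)
      have "Vt s t = (1 - t) / (1 - s)" using 3 Y' s m by (simp add: Vt_dec)
      moreover have "(1 - t) / (1 - s) < 1/6" using 3 Y' s by (simp add: dvs m_def algebra_simps)
      moreover have "0 \<le> (1 - t) / (1 - s)" using t s by simp
      ultimately have "1/3 \<le> 1/3 + Vt s t" "1/3 + Vt s t \<le> 1/2" by linarith+
      then show ?thesis using c segP2[of "1/3 + Vt s t"] by (simp add: Hc_def)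
    qed
  qed
  have c0: "cnt T 0 = 0" using m Y' Tv by (auto simp: cnt_def)
  show "jumpok F (Hc s (cntL T 1) 1) (Hc s (cnt T 0) 0) (1/3)"
  proof (cases "Y < 1")
    case True
    then have "cntL T 1 = 2" using m Tv by (simp add: cntL_def)
    then show ?thesis using c0 Vt01[OF s] Pvals jumpok_eq[of F \<theta>1] vals by (simp add: Hc_def)
  next
    case False
    then have "cntL T 1 = 0" using m Tv Y' by (simp add: cntL_def)
    then show ?thesis using c0 Vt01[OF s] segP1[of "1/3"] by (simp add: Hc_def)
  qed
qed

definition Hd :: "real \<Rightarrow> real \<Rightarrow> nat \<Rightarrow> real \<Rightarrow> real" where
  "Hd s lam i t = P1 (lam + Vt s t)"

lemma stageDd:
  assumes s: "0 < s" "s < 1" and l: "1/3 \<le> lam"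
  defines "T \<equiv> mkT 1 1 1 1 1"
  shows "frame T (Hd s lam)"
    "\<And>t. 0 < t \<Longrightarrow> t < 1 \<Longrightarrow> jumpok F (Hd s lam (cntL T t) t) (Hd s lam (cnt T t) t) (lam + Vt s t)"
    "jumpok F (Hd s lam (cntL T 1) 1) (Hd s lam (cnt T 0) 0) lam"
proof -
  have e: "Hd s lam i = (\<lambda>t. P1 (lam + Vt s t))" for i by (simp add: Hd_def fun_eq_iff)
  show "frame T (Hd s lam)" unfolding frame_def T_def srt_mkT e by (auto intro!: contPV)
  show "jumpok F (Hd s lam (cntL T t) t) (Hd s lam (cnt T t) t) (lam + Vt s t)" if t: "0 < t" "t < 1" for t
    using segP1[of "lam + Vt s t"] Vt_nonneg[OF s, of t] t l by (simp add: Hd_def)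
  show "jumpok F (Hd s lam (cntL T 1) 1) (Hd s lam (cnt T 0) 0) lam"
    using segP1[of "lam"] Vt01[OF s] l by (simp add: Hd_def)
qed

end


lemma aff:
  fixes f :: "real \<Rightarrow> real"
  assumes m: "m > 0" and AB: "A \<le> B" and cf: "continuous_on UNIV f"
  shows "integral {A..B} (\<lambda>u. f (m * u + k)) = (1 / m) * integral {m * A + k..m * B + k} f"
proof -
  have "(f has_integral integral {m * A + k..m * B + k} f) (cbox (m * A + k) (m * B + k))"
    using integrable_continuous_interval[OF continuous_on_subset[OF cf]] by (simp add: has_integral_integral)
  from has_integral_affinity'[OF this m, of k]
  have h: "((\<lambda>x. f (m * x + k)) has_integral (inverse m * integral {m * A + k..m * B + k} f))
     {inverse m * (m * A)..inverse m * (m * B)}"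
    using m by simp
  have e: "inverse m * (m * A) = A" "inverse m * (m * B) = B" using m by simp_all
  from h[unfolded e] show ?thesis by (simp add: integral_unique divide_inverse)
qed

lemma cv_inc:
  fixes f :: "real \<Rightarrow> real"
  assumes s: "0 < s" "s < 1" and ab: "a \<le> b" "b \<le> s" and cf: "continuous_on UNIV f"
  shows "integral {a..b} (\<lambda>t. f (c + Vt s t)) = s * integral {c + a / s..c + b / s} f"
proof -
  have "integral {a..b} (\<lambda>t. f (c + Vt s t)) = integral {a..b} (\<lambda>t. f ((1 / s) * t + c))"
    by (rule Henstock_Kurzweil_Integration.integral_cong) (use s ab in \<open>simp add: Vt_inc algebra_simps\<close>)
  also have "\<dots> = (1 / (1 / s)) * integral {(1 / s) * a + c..(1 / s) * b + c} f"
    by (rule aff) (use s ab cf in auto)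
  also have "\<dots> = s * integral {c + a / s..c + b / s} f" by (simp add: algebra_simps)
  finally show ?thesis .
qed

lemma cv_dec:
  fixes f :: "real \<Rightarrow> real"
  assumes s: "0 < s" "s < 1" and ab: "s \<le> a" "a \<le> b" and cf: "continuous_on UNIV f"
  shows "integral {a..b} (\<lambda>t. f (c + Vt s t)) = (1 - s) * integral {c + (1 - b) / (1 - s)..c + (1 - a) / (1 - s)} f"
proof -
  define g where "g u = f ((1 / (1 - s)) * u + (c + 1 / (1 - s)))" for u
  have cg: "continuous_on UNIV g" unfolding g_def
    by (intro continuous_on_compose2[OF cf] continuous_intros) auto
  have "integral {a..b} (\<lambda>t. f (c + Vt s t)) = integral {a..b} (\<lambda>t. g (- t))"
    by (rule Henstock_Kurzweil_Integration.integral_cong)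
       (use s ab in \<open>simp add: Vt_dec g_def diff_divide_distrib algebra_simps\<close>)
  also have "\<dots> = integral {- b..- a} g"
    using Henstock_Kurzweil_Integration.integral_reflect_real[of "- a" "- b" g] by simp
  also have "\<dots> = (1 / (1 / (1 - s))) * integral {(1 / (1 - s)) * (- b) + (c + 1 / (1 - s))..(1 / (1 - s)) * (- a) + (c + 1 / (1 - s))} f"
    unfolding g_def by (rule aff) (use s ab cf in auto)
  also have "(1 / (1 - s)) * (- b) + (c + 1 / (1 - s)) = c + (1 - b) / (1 - s)"
    by (simp add: diff_divide_distrib algebra_simps)
  also have "(1 / (1 - s)) * (- a) + (c + 1 / (1 - s)) = c + (1 - a) / (1 - s)"
    by (simp add: diff_divide_distrib algebra_simps)
  finally show ?thesis by simp
qed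

lemma int_split:
  fixes f :: "real \<Rightarrow> real"
  assumes "a \<le> c" "c \<le> b" "continuous_on UNIV f"
  shows "integral {a..b} f = integral {a..c} f + integral {c..b} f"
  using Henstock_Kurzweil_Integration.integral_combine[OF assms(1,2)
      integrable_continuous_interval[OF continuous_on_subset[OF assms(3)]]] by simp

lemma sum3:
  assumes "frame (mkT a b 1 1 1) H"
  shows "Wf (mkT a b 1 1 1) H 1 = integral {0..a} (H 0) + integral {a..b} (H 1) + integral {b..1} (H 2)"
proof -
  interpret frame "mkT a b 1 1 1" H by fact
  have "(Gam (mkT a b 1 1 1) H has_integral
     (integral {0..a} (H 0) + integral {a..b} (H 1) + integral {b..1} (H 2)
      + integral {1..1} (H 3) + integral {1..1} (H 4) + integral {1..1} (H 5))) {0..1}"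
    using Gam_has_integral[OF srtT contH] by (simp add: mkT_def)
  then show ?thesis by (simp add: Wf_def integral_unique)
qed

lemma sum5:
  assumes "frame (mkT a b c d e) H"
  shows "Wf (mkT a b c d e) H 1 = integral {0..a} (H 0) + integral {a..b} (H 1) + integral {b..c} (H 2)
      + integral {c..d} (H 3) + integral {d..e} (H 4) + integral {e..1} (H 5)"
proof -
  have fr: "srt (mkT a b c d e)" "\<And>i. continuous_on {0..1} (H i)" using assms by (auto simp: frame_def)
  show ?thesis
    using Gam_has_integral[of "mkT a b c d e" H, OF fr(1) fr(2)] by (simp add: mkT_def Wf_def integral_unique)
qed

context HJ begin

lemma int_psi1: "1/3 \<le> A \<Longrightarrow> integral {A..B} \<psi>1 = integral {A..B} P1"
  by (rule Henstock_Kurzweil_Integration.integral_cong) (simp add: P1)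
lemma int_psi3: "0 \<le> A \<Longrightarrow> B \<le> 1/2 \<Longrightarrow> integral {A..B} \<psi>3 = integral {A..B} P3"
  by (rule Henstock_Kurzweil_Integration.integral_cong) (simp add: P3)

lemma mix_eq: "mixint F \<theta>1 \<theta>2 s = s * integral {1/3..1/2} P1 + (1 - s) * integral {1/3..1/2} P3"
proof -
  have "mixint F \<theta>1 \<theta>2 s = integral {1/3..1/2} (\<lambda>y. s * P1 y + (1 - s) * P3 y)"
    unfolding mixint_def by (rule Henstock_Kurzweil_Integration.integral_cong) (simp add: P1 P3)
  also have "\<dots> = integral {1/3..1/2} (\<lambda>y. s * P1 y) + integral {1/3..1/2} (\<lambda>y. (1 - s) * P3 y)"
    by (rule Henstock_Kurzweil_Integration.integral_add)
       (auto intro!: integrable_continuous_interval continuous_intros continuous_on_subset[OF contP1]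
          continuous_on_subset[OF contP3])
  also have "\<dots> = s * integral {1/3..1/2} P1 + (1 - s) * integral {1/3..1/2} P3"
    by simp
  finally show ?thesis .
qed

definition "bform s lam = integral {lam..1/3} \<psi>3 + integral {1/2..1 + lam} \<psi>1 + mixint F \<theta>1 \<theta>2 s"

lemma b_value:
  assumes s: "0 < s" "s < 1" and l: "0 \<le> lam" "lam \<le> 1/3"
  shows "Wf (Tb s lam) (Hb s lam) 1 = bform s lam"
proof -
  define a where "a = s * (1/3 - lam)"
  define b where "b = 1 - (1 - s) * (1/2 - lam)"
  have a: "0 \<le> a" "a \<le> s" using s l by (auto simp: a_def mult_left_le)
  have b: "s \<le> b" "b \<le> 1"
  proof -
    have "(1 - s) * (1/2 + lam) \<ge> 0" using s l by simp
    moreover have "b - s = (1 - s) * (1/2 + lam)" by (simp add: b_def algebra_simps)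
    ultimately show "s \<le> b" by linarith
    have "(1 - s) * (1/2 - lam) \<ge> 0" using s l by simp
    then show "b \<le> 1" by (simp add: b_def)
  qed
  have T: "Tb s lam = mkT a b 1 1 1" by (simp add: Tb_def a_def b_def)
  have H: "Hb s lam 0 = (\<lambda>t. P3 (lam + Vt s t))" "Hb s lam 1 = (\<lambda>t. P1 (lam + Vt s t))"
    "Hb s lam 2 = (\<lambda>t. P3 (lam + Vt s t))" "Hb s lam (Suc 0) = (\<lambda>t. P1 (lam + Vt s t))"
    by (auto simp: Hb_def fun_eq_iff)
  have W: "Wf (Tb s lam) (Hb s lam) 1 = integral {0..a} (\<lambda>t. P3 (lam + Vt s t))
      + integral {a..b} (\<lambda>t. P1 (lam + Vt s t)) + integral {b..1} (\<lambda>t. P3 (lam + Vt s t))"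
    using sum3[of a b "Hb s lam"] fam_b(1)[OF s l] by (simp add: T H)
  have i1: "integral {0..a} (\<lambda>t. P3 (lam + Vt s t)) = s * integral {lam..1/3} P3"
    using cv_inc[OF s a(1) a(2) contP3, of lam] cv_inc[OF s _ a(2) contP3, of 0 lam] s a
    by (simp add: a_def)
  have cP1: "continuous_on UNIV (\<lambda>t. P1 (lam + Vt s t))" by (rule contPV)
  have i2: "integral {a..b} (\<lambda>t. P1 (lam + Vt s t)) = integral {a..s} (\<lambda>t. P1 (lam + Vt s t))
      + integral {s..b} (\<lambda>t. P1 (lam + Vt s t))"
    by (rule int_split[OF a(2) b(1) cP1])
  have ea: "lam + a / s = 1/3" using s by (simp add: a_def)
  have es: "lam + s / s = lam + 1" using s by simp
  have i2a: "integral {a..s} (\<lambda>t. P1 (lam + Vt s t)) = s * integral {1/3..lam + 1} P1"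
    using cv_inc[OF s a(2) order_refl contP1, of lam] unfolding ea es .
  have eb: "lam + (1 - b) / (1 - s) = 1/2" using s by (simp add: b_def)
  have es': "lam + (1 - s) / (1 - s) = lam + 1" "lam + (1 - 1) / (1 - s) = lam" using s by simp_all
  have i2b: "integral {s..b} (\<lambda>t. P1 (lam + Vt s t)) = (1 - s) * integral {1/2..lam + 1} P1"
    using cv_dec[OF s order_refl b(1) contP1, of lam] unfolding eb es' .
  have i3: "integral {b..1} (\<lambda>t. P3 (lam + Vt s t)) = (1 - s) * integral {lam..1/2} P3"
    using cv_dec[OF s b(1) b(2) contP3, of lam] unfolding eb es' .
  have sp1: "integral {1/3..lam + 1} P1 = integral {1/3..1/2} P1 + integral {1/2..lam + 1} P1"
    by (rule int_split) (use l contP1 in auto)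
  have sp3: "integral {lam..1/2} P3 = integral {lam..1/3} P3 + integral {1/3..1/2} P3"
    by (rule int_split) (use l contP3 in auto)
  have bf: "bform s lam = integral {lam..1/3} P3 + integral {1/2..1 + lam} P1
      + (s * integral {1/3..1/2} P1 + (1 - s) * integral {1/3..1/2} P3)"
    unfolding bform_def mix_eq using int_psi1[of "1/2" "1 + lam"] int_psi3[of lam "1/3"] l by simp
  show ?thesis unfolding W i1 i2 i2a i2b i3 bf sp1 sp3 by (simp add: algebra_simps)
qed

end


lemma int_le_const:
  fixes f :: "real \<Rightarrow> real"
  assumes "a \<le> b" "continuous_on {a..b} f" "\<And>t. a \<le> t \<Longrightarrow> t \<le> b \<Longrightarrow> f t \<le> C"
  shows "integral {a..b} f \<le> C * (b - a)"
proof -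
  have "integral {a..b} f \<le> integral {a..b} (\<lambda>t. C)"
    by (rule integral_le) (use assms in \<open>auto intro: integrable_continuous_interval\<close>)
  then show ?thesis using assms(1) by (simp add: mult.commute)
qed

lemma int_ge_const:
  fixes f :: "real \<Rightarrow> real"
  assumes "a \<le> b" "continuous_on {a..b} f" "\<And>t. a \<le> t \<Longrightarrow> t \<le> b \<Longrightarrow> C \<le> f t"
  shows "C * (b - a) \<le> integral {a..b} f"
proof -
  have "integral {a..b} (\<lambda>t. C) \<le> integral {a..b} f"
    by (rule integral_le) (use assms in \<open>auto intro: integrable_continuous_interval\<close>)
  then show ?thesis using assms(1) by (simp add: mult.commute)
qed

lemma IVT_between:
  fixes f :: "real \<Rightarrow> real"
  assumes "continuous_on {a..b} f" "a \<le> b" "(f a \<le> y \<and> y \<le> f b) \<or> (f b \<le> y \<and> y \<le> f a)"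
  shows "\<exists>x. a \<le> x \<and> x \<le> b \<and> f x = y"
  using assms IVT'[of f a y b] IVT2'[of f b y a] by blast

lemma indef_cont:
  fixes h :: "real \<Rightarrow> real"
  assumes "continuous_on {0..1} h"
  shows "continuous_on {0..1} (\<lambda>u. integral {0..u} h)"
  by (rule indefinite_integral_continuous_1) (rule integrable_continuous_interval[OF assms])

lemma int_diff01:
  fixes h :: "real \<Rightarrow> real"
  assumes "continuous_on {0..1} h" "0 \<le> u" "u \<le> v" "v \<le> 1"
  shows "integral {u..v} h = integral {0..v} h - integral {0..u} h"
proof -
  have "h integrable_on {0..v}"
    using integrable_continuous_interval[OF continuous_on_subset[OF assms(1)]] assms by auto
  from Henstock_Kurzweil_Integration.integral_combine[OF assms(2,3) this] show ?thesis by simp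
qed

lemma P_cont:
  fixes t1 t2 t3 t4 t5 :: "real \<Rightarrow> real"
  assumes cH: "\<And>i. continuous_on {0..1} (H i)"
    and ct: "continuous_on {r0..r1} t1" "continuous_on {r0..r1} t2" "continuous_on {r0..r1} t3"
      "continuous_on {r0..r1} t4" "continuous_on {r0..r1} t5"
    and srt: "\<And>r. r0 \<le> r \<Longrightarrow> r \<le> r1 \<Longrightarrow> 0 \<le> t1 r \<and> t1 r \<le> t2 r \<and> t2 r \<le> t3 r \<and> t3 r \<le> t4 r
       \<and> t4 r \<le> t5 r \<and> t5 r \<le> 1"
  shows "continuous_on {r0..r1} (\<lambda>r. Wf (mkT (t1 r) (t2 r) (t3 r) (t4 r) (t5 r)) H 1)"
proof -
  define G where "G i u = integral {0..u} (H i)" for i u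
  have cG: "continuous_on {0..1} (G i)" for i unfolding G_def by (rule indef_cont[OF cH])
  have cGt: "continuous_on {r0..r1} (\<lambda>r. G i (t r))"
    if "continuous_on {r0..r1} t" "\<And>r. r0 \<le> r \<Longrightarrow> r \<le> r1 \<Longrightarrow> 0 \<le> t r \<and> t r \<le> 1" for i t
    by (rule continuous_on_compose2[OF cG[of i] that(1)]) (use that(2) in auto)
  have eq: "Wf (mkT (t1 r) (t2 r) (t3 r) (t4 r) (t5 r)) H 1 =
      (G 0 (t1 r) - G 0 0) + (G 1 (t2 r) - G 1 (t1 r)) + (G 2 (t3 r) - G 2 (t2 r))
      + (G 3 (t4 r) - G 3 (t3 r)) + (G 4 (t5 r) - G 4 (t4 r)) + (G 5 1 - G 5 (t5 r))"
    if r: "r \<in> {r0..r1}" for r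
  proof -
    have s: "0 \<le> t1 r" "t1 r \<le> t2 r" "t2 r \<le> t3 r" "t3 r \<le> t4 r" "t4 r \<le> t5 r" "t5 r \<le> 1"
      using srt r by auto
    have fr: "frame (mkT (t1 r) (t2 r) (t3 r) (t4 r) (t5 r)) H"
      unfolding frame_def srt_mkT using s cH by auto
    have z: "0 \<le> t2 r" "0 \<le> t3 r" "0 \<le> t4 r" "0 \<le> t5 r" "t1 r \<le> 1" "t2 r \<le> 1" "t3 r \<le> 1" "t4 r \<le> 1"
      using s by linarith+
    have i0: "integral {0..t1 r} (H 0) = G 0 (t1 r) - G 0 0" by (simp add: G_def)
    have i1: "integral {t1 r..t2 r} (H 1) = G 1 (t2 r) - G 1 (t1 r)"
      unfolding G_def by (rule int_diff01[OF cH]) (use s z in auto)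
    have i2: "integral {t2 r..t3 r} (H 2) = G 2 (t3 r) - G 2 (t2 r)"
      unfolding G_def by (rule int_diff01[OF cH]) (use s z in auto)
    have i3: "integral {t3 r..t4 r} (H 3) = G 3 (t4 r) - G 3 (t3 r)"
      unfolding G_def by (rule int_diff01[OF cH]) (use s z in auto)
    have i4: "integral {t4 r..t5 r} (H 4) = G 4 (t5 r) - G 4 (t4 r)"
      unfolding G_def by (rule int_diff01[OF cH]) (use s z in auto)
    have i5: "integral {t5 r..1} (H 5) = G 5 1 - G 5 (t5 r)"
      unfolding G_def by (rule int_diff01[OF cH]) (use s z in auto)
    show ?thesis unfolding sum5[OF fr] i0 i1 i2 i3 i4 i5 ..
  qed
  have "continuous_on {r0..r1} (\<lambda>r. (G 0 (t1 r) - G 0 0) + (G 1 (t2 r) - G 1 (t1 r)) + (G 2 (t3 r) - G 2 (t2 r))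
      + (G 3 (t4 r) - G 3 (t3 r)) + (G 4 (t5 r) - G 4 (t4 r)) + (G 5 1 - G 5 (t5 r)))"
  proof -
    have b: "\<And>r. r0 \<le> r \<Longrightarrow> r \<le> r1 \<Longrightarrow> 0 \<le> t1 r \<and> t1 r \<le> 1" "\<And>r. r0 \<le> r \<Longrightarrow> r \<le> r1 \<Longrightarrow> 0 \<le> t2 r \<and> t2 r \<le> 1"
      "\<And>r. r0 \<le> r \<Longrightarrow> r \<le> r1 \<Longrightarrow> 0 \<le> t3 r \<and> t3 r \<le> 1" "\<And>r. r0 \<le> r \<Longrightarrow> r \<le> r1 \<Longrightarrow> 0 \<le> t4 r \<and> t4 r \<le> 1"
      "\<And>r. r0 \<le> r \<Longrightarrow> r \<le> r1 \<Longrightarrow> 0 \<le> t5 r \<and> t5 r \<le> 1"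
      using srt by (smt (verit))+
    show ?thesis
      by (intro continuous_intros cGt ct b)
  qed
  then show ?thesis by (rule continuous_on_cong[THEN iffD1, OF refl, rotated]) (use eq in auto)
qed


context HJ begin

definition "solvable s p lam \<longleftrightarrow> (\<exists>w. visc_sol F (Vr s) lam w \<and> wper w p)"

lemma solv_frame:
  assumes s: "0 < s" "s < 1" and fr: "frame T H"
    and J1: "\<And>t. 0 < t \<Longrightarrow> t < 1 \<Longrightarrow> jumpok F (H (cntL T t) t) (H (cnt T t) t) (lam + Vt s t)"
    and J0: "jumpok F (H (cntL T 1) 1) (H (cnt T 0) 0) lam"
  shows "solvable s (Wf T H 1) lam"
  using frame.frame_sol[OF fr s J1 J0] unfolding solvable_def by blast

lemma solvA: "0 < s \<Longrightarrow> s < 1 \<Longrightarrow> (1 + s) / 2 \<le> X \<Longrightarrow> X \<le> 1 \<Longrightarrow>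
    solvable s (Wf (mkT (s / 3) ((1 + s) / 2) X X X) (Ha s) 1) 0"
  by (rule solv_frame[OF _ _ stageA(1) stageA(2) stageA(3)])
lemma solvB: "0 < s \<Longrightarrow> s < 1 \<Longrightarrow> (1 + s) / 2 \<le> Y \<Longrightarrow> Y \<le> (2 + s) / 3 \<Longrightarrow>
    solvable s (Wf (mkT (s / 3) ((1 + s) / 2) ((1 + s) / 2) Y Y) (Ha s) 1) 0"
  by (rule solv_frame[OF _ _ stageB(1) stageB(2) stageB(3)])
lemma solvC: "0 < s \<Longrightarrow> s < 1 \<Longrightarrow> (1 + s) / 2 \<le> Z \<Longrightarrow> Z \<le> (2 + s) / 3 \<Longrightarrow>
    solvable s (Wf (mkT (s / 3) ((1 + s) / 2) ((1 + s) / 2) Z ((2 + s) / 3)) (Ha s) 1) 0"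
  by (rule solv_frame[OF _ _ stageC(1) stageC(2) stageC(3)])
lemma solvD: "0 < s \<Longrightarrow> s < 1 \<Longrightarrow> s / 2 \<le> Q \<Longrightarrow> Q \<le> (1 + s) / 2 \<Longrightarrow>
    solvable s (Wf (mkT (s / 3) Q Q Q ((2 + s) / 3)) (Ha s) 1) 0"
  by (rule solv_frame[OF _ _ stageD(1) stageD(2) stageD(3)])
lemma solvC1: "0 < s \<Longrightarrow> s < 1 \<Longrightarrow> (5 + s) / 6 \<le> Y \<Longrightarrow> Y \<le> 1 \<Longrightarrow>
    solvable s (Wf (mkT ((5 + s) / 6) Y 1 1 1) (Hc s) 1) (1/3)"
  by (rule solv_frame[OF _ _ stageC1(1) stageC1(2) stageC1(3)])
lemma solvC2: "0 < s \<Longrightarrow> s < 1 \<Longrightarrow> (5 + s) / 6 \<le> Y \<Longrightarrow> Y \<le> 1 \<Longrightarrow>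
    solvable s (Wf (mkT Y Y 1 1 1) (Hc s) 1) (1/3)"
  by (rule solv_frame[OF _ _ stageC2(1) stageC2(2) stageC2(3)])
lemma solvd: "0 < s \<Longrightarrow> s < 1 \<Longrightarrow> 1/3 \<le> lam \<Longrightarrow>
    solvable s (Wf (mkT 1 1 1 1 1) (Hd s lam) 1) lam"
  by (rule solv_frame[OF _ _ stageDd(1) stageDd(2) stageDd(3)])
lemma solvb: assumes s: "0 < s" "s < 1" and l: "0 \<le> lam" "lam \<le> 1/3" shows "solvable s (bform s lam) lam"
proof -
  have "solvable s (Wf (Tb s lam) (Hb s lam) 1) lam"
    by (rule solv_frame[OF s fam_b(1)[OF s l] fam_b(2)[OF s l] fam_b(3)[OF s l]])
  then show ?thesis using b_value[OF s l] by simp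
qed

lemma a_start: assumes s: "0 < s" "s < 1"
  shows "Wf (mkT (s / 3) ((1 + s) / 2) 1 1 1) (Ha s) 1 = p_plus F \<theta>1 \<theta>2 s"
proof -
  have e1: "1 - (1 - s) * (1/2 - 0) = (1 + s) / 2" "s * (1/3 - 0) = s / 3" by (simp_all add: field_simps)
  have T: "Tb s 0 = mkT (s / 3) ((1 + s) / 2) 1 1 1" unfolding Tb_def e1 ..
  have frA: "frame (mkT (s / 3) ((1 + s) / 2) 1 1 1) (Ha s)" using stageA(1)[OF s, of 1] s by simp
  have frB: "frame (mkT (s / 3) ((1 + s) / 2) 1 1 1) (Hb s 0)" using fam_b(1)[OF s, of 0] T by simp
  have e: "Ha s 0 = Hb s 0 0" "Ha s 1 = Hb s 0 1" "Ha s 2 = Hb s 0 2"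
    by (auto simp: Ha_def Hb_def fun_eq_iff)
  have "Wf (mkT (s / 3) ((1 + s) / 2) 1 1 1) (Ha s) 1 = Wf (mkT (s / 3) ((1 + s) / 2) 1 1 1) (Hb s 0) 1"
    unfolding sum3[OF frA] sum3[OF frB] e ..
  also have "\<dots> = bform s 0" using b_value[OF s, of 0] T by simp
  also have "\<dots> = p_plus F \<theta>1 \<theta>2 s" by (simp add: bform_def p_plus_def)
  finally show ?thesis .
qed

lemma P1_le_half: "v \<le> 1/2 \<Longrightarrow> P1 v \<le> \<psi>1 (1/2)"
  unfolding P1_def by (rule psi1_mono') auto
lemma P1_ge_half: "1/2 \<le> v \<Longrightarrow> \<psi>1 (1/2) \<le> P1 v"
  using P1[of v] psi1_mono'[of "1/2" v] by simp

lemma D_end: assumes s: "0 < s" "s < 1"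
  shows "Wf (mkT (s / 3) (s / 2) (s / 2) (s / 2) ((2 + s) / 3)) (Ha s) 1 < 0"
proof -
  define n where "n = (2 + s) / 3"
  have n: "s < n" "n < 1" using s by (auto simp: n_def)
  have fr: "frame (mkT (s / 3) (s / 2) (s / 2) (s / 2) n) (Ha s)"
    using stageD(1)[OF s, of "s/2"] s by (simp add: n_def)
  have cc: "continuous_on S (Ha s i)" if "S \<subseteq> {0..1}" for S i
    using continuous_on_subset[OF Ha_cont that] .
  have e: "Ha s 0 = (\<lambda>t. P3 (Vt s t))" "Ha s 1 = (\<lambda>t. P1 (Vt s t))" "Ha s 4 = (\<lambda>t. - P1 (Vt s t))"
    "Ha s 5 = (\<lambda>t. - P3 (Vt s t))" by (auto simp: Ha_def fun_eq_iff)
  have W: "Wf (mkT (s / 3) (s / 2) (s / 2) (s / 2) n) (Ha s) 1 = integral {0..s/3} (\<lambda>t. P3 (Vt s t))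
      + integral {s/3..s/2} (\<lambda>t. P1 (Vt s t)) - integral {s/2..n} (\<lambda>t. P1 (Vt s t))
      - integral {n..1} (\<lambda>t. P3 (Vt s t))"
    unfolding sum5[OF fr] e by simp
  have I0: "integral {0..s/3} (\<lambda>t. P3 (Vt s t)) \<le> \<theta>2 * (s/3 - 0)"
    by (rule int_le_const) (use s P3_le in \<open>auto intro: contPV0\<close>)
  have I1: "integral {s/3..s/2} (\<lambda>t. P1 (Vt s t)) \<le> \<psi>1 (1/2) * (s/2 - s/3)"
  proof (rule int_le_const)
    fix t assume t: "s/3 \<le> t" "t \<le> s/2"
    then have "Vt s t = t / s" using s by (simp add: Vt_inc)
    moreover have "t / s \<le> 1/2" using t s by (simp add: dvs)
    ultimately show "P1 (Vt s t) \<le> \<psi>1 (1/2)" using P1_le_half by simp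
  qed (use s in \<open>auto intro: contPV0\<close>)
  have sp: "integral {s/2..n} (\<lambda>t. P1 (Vt s t)) = integral {s/2..s} (\<lambda>t. P1 (Vt s t)) + integral {s..n} (\<lambda>t. P1 (Vt s t))"
    by (rule int_split) (use s n in \<open>auto intro: contPV0\<close>)
  have I2: "\<psi>1 (1/2) * (s - s/2) \<le> integral {s/2..s} (\<lambda>t. P1 (Vt s t))"
  proof (rule int_ge_const)
    fix t assume t: "s/2 \<le> t" "t \<le> s"
    then have "Vt s t = t / s" using s by (simp add: Vt_inc)
    moreover have "1/2 \<le> t / s" using t s by (simp add: dvs)
    ultimately show "\<psi>1 (1/2) \<le> P1 (Vt s t)" using P1_ge_half by simp
  qed (use s in \<open>auto intro: contPV0\<close>)
  have I3: "0 * (n - s) \<le> integral {s..n} (\<lambda>t. P1 (Vt s t))"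
    by (rule int_ge_const) (use s n P1ge th in \<open>auto intro: contPV0 order_trans[of 0 \<theta>1]\<close>)
  have I4: "0 * (1 - n) \<le> integral {n..1} (\<lambda>t. P3 (Vt s t))"
    by (rule int_ge_const) (use s n P3_le in \<open>auto intro: contPV0\<close>)
  have "\<theta>2 < \<psi>1 (1/2)" using psi1[of "1/2"] th by simp
  then have XY: "s * \<theta>2 < s * \<psi>1 (1/2)" using s by simp
  have e: "\<theta>2 * (s/3 - 0) = (s * \<theta>2) / 3" "\<psi>1 (1/2) * (s/2 - s/3) = (s * \<psi>1 (1/2)) / 6"
    "\<psi>1 (1/2) * (s - s/2) = (s * \<psi>1 (1/2)) / 2" by (simp_all add: field_simps)
  have key: "\<And>A0 A1 A2 A3 A4 X Y :: real. A0 \<le> X / 3 \<Longrightarrow> A1 \<le> Y / 6 \<Longrightarrow> Y / 2 \<le> A2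
     \<Longrightarrow> 0 \<le> A3 \<Longrightarrow> 0 \<le> A4 \<Longrightarrow> X < Y \<Longrightarrow> A0 + A1 - (A2 + A3) - A4 < 0" by linarith
  have J0: "integral {0..s/3} (\<lambda>t. P3 (Vt s t)) \<le> (s * \<theta>2) / 3" using I0 unfolding e(1) .
  have J1: "integral {s/3..s/2} (\<lambda>t. P1 (Vt s t)) \<le> (s * \<psi>1 (1/2)) / 6" using I1 unfolding e(2) .
  have J2: "(s * \<psi>1 (1/2)) / 2 \<le> integral {s/2..s} (\<lambda>t. P1 (Vt s t))" using I2 unfolding e(3) .
  have J3: "0 \<le> integral {s..n} (\<lambda>t. P1 (Vt s t))" using I3 by simp
  have J4: "0 \<le> integral {n..1} (\<lambda>t. P3 (Vt s t))" using I4 by simp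
  have "Wf (mkT (s / 3) (s / 2) (s / 2) (s / 2) n) (Ha s) 1 < 0"
    unfolding W sp by (rule key[OF J0 J1 J2 J3 J4 XY])
  then show ?thesis unfolding n_def .
qed

end


context HJ begin

lemma Hc_eqs: "Hc s 0 = (\<lambda>t. P1 (1/3 + Vt s t))" "Hc s 1 = (\<lambda>t. P3 (1/3 + Vt s t))"
  "Hc s (Suc 0) = (\<lambda>t. P3 (1/3 + Vt s t))" by (auto simp: Hc_def fun_eq_iff)

lemma full_P1:
  assumes s: "0 < s" "s < 1"
  shows "integral {0..1} (\<lambda>t. P1 (c + Vt s t)) = integral {c..c + 1} P1"
proof -
  have sp: "integral {0..1} (\<lambda>t. P1 (c + Vt s t)) = integral {0..s} (\<lambda>t. P1 (c + Vt s t)) + integral {s..1} (\<lambda>t. P1 (c + Vt s t))"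
    by (rule int_split) (use s in \<open>auto intro: contPV\<close>)
  have e: "c + 0 / s = c" "c + s / s = c + 1" "c + (1 - 1) / (1 - s) = c" "c + (1 - s) / (1 - s) = c + 1"
    using s by simp_all
  have i1: "integral {0..s} (\<lambda>t. P1 (c + Vt s t)) = s * integral {c..c + 1} P1"
    using cv_inc[OF s _ order_refl contP1, of 0 c] s unfolding e by simp
  have i2: "integral {s..1} (\<lambda>t. P1 (c + Vt s t)) = (1 - s) * integral {c..c + 1} P1"
    using cv_dec[OF s order_refl _ contP1, of 1 c] s unfolding e by simp
  show ?thesis unfolding sp i1 i2 by (simp add: algebra_simps)
qed

lemma c_end2: assumes s: "0 < s" "s < 1"
  shows "Wf (mkT 1 1 1 1 1) (Hc s) 1 = q_plus F \<theta>1"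
proof -
  have fr: "frame (mkT 1 1 1 1 1) (Hc s)" using stageC2(1)[OF s, of 1] s by simp
  have "Wf (mkT 1 1 1 1 1) (Hc s) 1 = integral {0..1} (\<lambda>t. P1 (1/3 + Vt s t))"
    using sum3[OF fr] by (simp add: Hc_eqs)
  also have "\<dots> = integral {1/3..4/3} P1" using full_P1[OF s, of "1/3"] by simp
  also have "\<dots> = q_plus F \<theta>1" unfolding q_plus_def by (rule int_psi1[symmetric]) simp
  finally show ?thesis .
qed

lemma d_value: assumes s: "0 < s" "s < 1" and l: "1/3 \<le> lam"
  shows "Wf (mkT 1 1 1 1 1) (Hd s lam) 1 = integral {lam..1 + lam} \<psi>1"
proof -
  have fr: "frame (mkT 1 1 1 1 1) (Hd s lam)" using stageDd(1)[OF s l] by simp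
  have e: "Hd s lam 0 = (\<lambda>t. P1 (lam + Vt s t))" by (simp add: Hd_def fun_eq_iff)
  have "Wf (mkT 1 1 1 1 1) (Hd s lam) 1 = integral {0..1} (\<lambda>t. P1 (lam + Vt s t))"
    using sum3[OF fr] by (simp add: e)
  also have "\<dots> = integral {lam..lam + 1} P1" by (rule full_P1[OF s])
  also have "\<dots> = integral {lam..1 + lam} \<psi>1" using int_psi1[OF l, of "1 + lam"] by (simp add: add.commute)
  finally show ?thesis .
qed

lemma c_end1: assumes s: "0 < s" "s < 1"
  shows "Wf (mkT ((5 + s) / 6) 1 1 1 1) (Hc s) 1 = q_minus F \<theta>1 \<theta>2 s"
proof -
  define m where "m = (5 + s) / 6"
  have m: "s \<le> m" "m \<le> 1" using s by (auto simp: m_def)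
  have fr: "frame (mkT m 1 1 1 1) (Hc s)" using stageC1(1)[OF s, of 1] s by (simp add: m_def)
  have W: "Wf (mkT m 1 1 1 1) (Hc s) 1 = integral {0..m} (\<lambda>t. P1 (1/3 + Vt s t))
      + integral {m..1} (\<lambda>t. P3 (1/3 + Vt s t))"
    using sum3[OF fr] by (simp add: Hc_eqs)
  have sp: "integral {0..m} (\<lambda>t. P1 (1/3 + Vt s t)) = integral {0..s} (\<lambda>t. P1 (1/3 + Vt s t))
      + integral {s..m} (\<lambda>t. P1 (1/3 + Vt s t))"
    by (rule int_split) (use s m in \<open>auto intro: contPV\<close>)
  have e: "1/3 + 0 / s = 1/3" "1/3 + s / s = 4/3" "1/3 + (1 - 1) / (1 - s) = 1/3"
    "(1::real)/3 + (1 - s) / (1 - s) = 4/3" "1/3 + (1 - m) / (1 - s) = 1/2"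
    using s by (simp_all add: m_def field_simps)
  have i1: "integral {0..s} (\<lambda>t. P1 (1/3 + Vt s t)) = s * integral {1/3..4/3} P1"
    using cv_inc[OF s _ order_refl contP1, of 0 "1/3"] s unfolding e by simp
  have i2: "integral {s..m} (\<lambda>t. P1 (1/3 + Vt s t)) = (1 - s) * integral {1/2..4/3} P1"
    using cv_dec[OF s order_refl m(1) contP1, of "1/3"] unfolding e .
  have i3: "integral {m..1} (\<lambda>t. P3 (1/3 + Vt s t)) = (1 - s) * integral {1/3..1/2} P3"
    using cv_dec[OF s m contP3, of "1/3"] unfolding e .
  have sp1: "integral {1/3..4/3} P1 = integral {1/3..1/2} P1 + integral {1/2..4/3} P1"
    by (rule int_split) (use contP1 in auto)
  have q: "q_minus F \<theta>1 \<theta>2 s = integral {1/2..4/3} P1 + (s * integral {1/3..1/2} P1 + (1 - s) * integral {1/3..1/2} P3)"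
    unfolding q_minus_def mix_eq using int_psi1[of "1/2" "4/3"] by simp
  show ?thesis unfolding m_def[symmetric] W sp i1 i2 i3 sp1 q by (simp add: algebra_simps)
qed

definition "btw x y p \<longleftrightarrow> (x \<le> p \<and> p \<le> y) \<or> (y \<le> p \<and> p \<le> x)"

lemma chain4:
  fixes v0 v1 v2 v3 v4 p :: real
  assumes "v4 \<le> p" "p \<le> v0"
  shows "btw v1 v0 p \<or> btw v1 v2 p \<or> btw v3 v2 p \<or> btw v4 v3 p"
  using assms unfolding btw_def by linarith

lemma stage_ivt:
  fixes f :: "real \<Rightarrow> real"
  assumes "continuous_on {a..b} f" "a \<le> b" "btw (f a) (f b) p"
  shows "\<exists>x. a \<le> x \<and> x \<le> b \<and> f x = p"
  using IVT_between[OF assms(1,2)] assms(3) unfolding btw_def by blast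

lemma exist_a:
  assumes s: "0 < s" "s < 1" and p: "0 \<le> p" "p \<le> p_plus F \<theta>1 \<theta>2 s"
  shows "solvable s p 0"
proof -
  define m where "m = (1 + s) / 2"
  define n where "n = (2 + s) / 3"
  have mn: "s / 3 \<le> m" "m \<le> 1" "m \<le> n" "n \<le> 1" "s / 3 \<le> s / 2" "s / 2 \<le> m" "0 \<le> s / 3"
    using s by (auto simp: m_def n_def)
  define fA where "fA X = Wf (mkT (s / 3) m X X X) (Ha s) 1" for X
  define fB where "fB Y = Wf (mkT (s / 3) m m Y Y) (Ha s) 1" for Y
  define fC where "fC Z = Wf (mkT (s / 3) m m Z n) (Ha s) 1" for Z
  define fD where "fD Q = Wf (mkT (s / 3) Q Q Q n) (Ha s) 1" for Q
  have cA: "continuous_on {m..1} fA" unfolding fA_def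
    by (rule P_cont[OF Ha_cont]) (use mn in \<open>auto intro!: continuous_intros\<close>)
  have cB: "continuous_on {m..n} fB" unfolding fB_def
    by (rule P_cont[OF Ha_cont]) (use mn in \<open>auto intro!: continuous_intros\<close>)
  have cC: "continuous_on {m..n} fC" unfolding fC_def
    by (rule P_cont[OF Ha_cont]) (use mn in \<open>auto intro!: continuous_intros\<close>)
  have cD: "continuous_on {s/2..m} fD" unfolding fD_def
    by (rule P_cont[OF Ha_cont]) (use mn in \<open>auto intro!: continuous_intros\<close>)
  have v0: "fA 1 = p_plus F \<theta>1 \<theta>2 s" unfolding fA_def m_def by (rule a_start[OF s])
  have v4: "fD (s / 2) < 0" unfolding fD_def n_def by (rule D_end[OF s])
  have j1: "fA m = fB m" "fB n = fC n" "fC m = fD m" by (simp_all add: fA_def fB_def fC_def fD_def)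
  have "btw (fA m) (fA 1) p \<or> btw (fB m) (fB n) p \<or> btw (fC m) (fC n) p \<or> btw (fD (s/2)) (fD m) p"
    using chain4[of "fD (s/2)" p "fA 1" "fA m" "fB n" "fC m"] p v0 v4 j1 by auto
  then show ?thesis
  proof (elim disjE)
    assume "btw (fA m) (fA 1) p"
    then obtain X where X: "m \<le> X" "X \<le> 1" "fA X = p" using stage_ivt[OF cA mn(2)] by blast
    show ?thesis using solvA[OF s, of X] X by (simp add: fA_def m_def)
  next
    assume "btw (fB m) (fB n) p"
    then obtain Y where Y: "m \<le> Y" "Y \<le> n" "fB Y = p" using stage_ivt[OF cB mn(3)] by blast
    show ?thesis using solvB[OF s, of Y] Y by (simp add: fB_def m_def n_def)
  next
    assume "btw (fC m) (fC n) p"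
    then obtain Z where Z: "m \<le> Z" "Z \<le> n" "fC Z = p" using stage_ivt[OF cC mn(3)] by blast
    show ?thesis using solvC[OF s, of Z] Z by (simp add: fC_def m_def n_def)
  next
    assume "btw (fD (s/2)) (fD m) p"
    then obtain Q where Q: "s/2 \<le> Q" "Q \<le> m" "fD Q = p" using stage_ivt[OF cD mn(6)] by blast
    show ?thesis using solvD[OF s, of Q] Q by (simp add: fD_def m_def n_def)
  qed
qed

lemma exist_c:
  assumes s: "0 < s" "s < 1" and p: "q_minus F \<theta>1 \<theta>2 s \<le> p" "p \<le> q_plus F \<theta>1"
  shows "solvable s p (1/3)"
proof -
  define m where "m = (5 + s) / 6"
  have mn: "0 \<le> m" "m \<le> 1" using s by (auto simp: m_def)
  define f1 where "f1 Y = Wf (mkT m Y 1 1 1) (Hc s) 1" for Y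
  define f2 where "f2 Y = Wf (mkT Y Y 1 1 1) (Hc s) 1" for Y
  have c1: "continuous_on {m..1} f1" unfolding f1_def
    by (rule P_cont[OF Hc_cont]) (use mn in \<open>auto intro!: continuous_intros\<close>)
  have c2: "continuous_on {m..1} f2" unfolding f2_def
    by (rule P_cont[OF Hc_cont]) (use mn in \<open>auto intro!: continuous_intros\<close>)
  have v0: "f1 1 = q_minus F \<theta>1 \<theta>2 s" unfolding f1_def m_def by (rule c_end1[OF s])
  have v2: "f2 1 = q_plus F \<theta>1" unfolding f2_def by (rule c_end2[OF s])
  have j: "f1 m = f2 m" by (simp add: f1_def f2_def)
  have "btw (f1 m) (f1 1) p \<or> btw (f2 m) (f2 1) p" using p v0 v2 j unfolding btw_def by linarith
  then show ?thesis
  proof (elim disjE)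
    assume "btw (f1 m) (f1 1) p"
    then obtain Y where Y: "m \<le> Y" "Y \<le> 1" "f1 Y = p" using stage_ivt[OF c1 mn(2)] by blast
    show ?thesis using solvC1[OF s, of Y] Y by (simp add: f1_def m_def)
  next
    assume "btw (f2 m) (f2 1) p"
    then obtain Y where Y: "m \<le> Y" "Y \<le> 1" "f2 Y = p" using stage_ivt[OF c2 mn(2)] by blast
    show ?thesis using solvC2[OF s, of Y] Y by (simp add: f2_def m_def)
  qed
qed

end


context HJ begin

lemma Hbar_solv: "0 < s \<Longrightarrow> s < 1 \<Longrightarrow> solvable s p lam \<Longrightarrow> Hbar F s p = lam"
  unfolding solvable_def using Hbar_eq by blast

lemma solv_reflect: "0 < s \<Longrightarrow> s < 1 \<Longrightarrow> solvable s p lam \<Longrightarrow> solvable (1 - s) (- p) lam"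
  unfolding solvable_def using reflect_sol[of s F] even by blast

lemma pplus_P: "p_plus F \<theta>1 \<theta>2 s = integral {0..1/3} P3 + integral {1/2..1} P1
   + (s * integral {1/3..1/2} P1 + (1 - s) * integral {1/3..1/2} P3)"
  unfolding p_plus_def mix_eq using int_psi1[of "1/2" 1] int_psi3[of 0 "1/3"] by simp
lemma qminus_P: "q_minus F \<theta>1 \<theta>2 s = integral {1/2..4/3} P1
   + (s * integral {1/3..1/2} P1 + (1 - s) * integral {1/3..1/2} P3)"
  unfolding q_minus_def mix_eq using int_psi1[of "1/2" "4/3"] by simp
lemma qplus_P: "q_plus F \<theta>1 = integral {1/3..4/3} P1"
  unfolding q_plus_def using int_psi1[of "1/3" "4/3"] by simp

lemma ineqs:
  assumes s: "0 < s" "s < 1"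
  shows "0 < p_plus F \<theta>1 \<theta>2 s" "p_plus F \<theta>1 \<theta>2 s < q_minus F \<theta>1 \<theta>2 s"
    "q_minus F \<theta>1 \<theta>2 s < q_plus F \<theta>1"
proof -
  have a1: "0 * (1/3 - 0) \<le> integral {0..1/3} P3" by (rule int_ge_const) (auto intro: continuous_on_subset[OF contP3] simp: P3_le)
  have a2: "\<theta>1 * (1 - 1/2) \<le> integral {1/2..1} P1" by (rule int_ge_const) (auto intro: continuous_on_subset[OF contP1] simp: P1ge)
  have a3: "\<theta>1 * (1/2 - 1/3) \<le> integral {1/3..1/2} P1" by (rule int_ge_const) (auto intro: continuous_on_subset[OF contP1] simp: P1ge)
  have a4: "0 * (1/2 - 1/3) \<le> integral {1/3..1/2} P3" by (rule int_ge_const) (auto intro: continuous_on_subset[OF contP3] simp: P3_le)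
  have a5: "integral {1/3..1/2} P3 \<le> \<theta>2 * (1/2 - 1/3)" by (rule int_le_const) (auto intro: continuous_on_subset[OF contP3] simp: P3_le)
  have a6: "integral {0..1/3} P3 \<le> \<theta>2 * (1/3 - 0)" by (rule int_le_const) (auto intro: continuous_on_subset[OF contP3] simp: P3_le)
  have a7: "\<theta>1 * (4/3 - 1) \<le> integral {1..4/3} P1" by (rule int_ge_const) (auto intro: continuous_on_subset[OF contP1] simp: P1ge)
  have t: "0 < \<theta>1" "\<theta>2 < \<theta>1" using th by auto
  have m1: "0 \<le> s * integral {1/3..1/2} P1" using a3 t s by simp
  have m2: "0 \<le> (1 - s) * integral {1/3..1/2} P3" using a4 s by simp
  have a1': "0 \<le> integral {0..1/3} P3" and a2': "\<theta>1 / 2 \<le> integral {1/2..1} P1" using a1 a2 by simp_all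
  show "0 < p_plus F \<theta>1 \<theta>2 s" unfolding pplus_P using a1' a2' m1 m2 t by linarith
  have sp: "integral {1/2..4/3} P1 = integral {1/2..1} P1 + integral {1..4/3} P1"
    by (rule int_split) (use contP1 in auto)
  have a6': "integral {0..1/3} P3 \<le> \<theta>2 / 3" and a7': "\<theta>1 / 3 \<le> integral {1..4/3} P1" using a6 a7 by simp_all
  show "p_plus F \<theta>1 \<theta>2 s < q_minus F \<theta>1 \<theta>2 s" unfolding pplus_P qminus_P sp using a6' a7' t by linarith
  have sp2: "integral {1/3..4/3} P1 = integral {1/3..1/2} P1 + integral {1/2..4/3} P1"
    by (rule int_split) (use contP1 in auto)
  have a3': "\<theta>1 / 6 \<le> integral {1/3..1/2} P1" and a5': "integral {1/3..1/2} P3 \<le> \<theta>2 / 6"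
    using a3 a5 by simp_all
  have "0 < integral {1/3..1/2} P1 - integral {1/3..1/2} P3" using a3' a5' t by linarith
  then have "0 < (1 - s) * (integral {1/3..1/2} P1 - integral {1/3..1/2} P3)"
    using s by (intro mult_pos_pos) auto
  then show "q_minus F \<theta>1 \<theta>2 s < q_plus F \<theta>1" unfolding qminus_P qplus_P sp2 by (simp add: algebra_simps)
qed

lemma bform_P: "0 \<le> lam \<Longrightarrow> lam \<le> 1/3 \<Longrightarrow>
   bform s lam = integral {lam..1/3} P3 + integral {1/2..1 + lam} P1 + mixint F \<theta>1 \<theta>2 s"
  unfolding bform_def using int_psi1[of "1/2" "1 + lam"] int_psi3[of lam "1/3"] by simp

lemma bform_cont: "continuous_on {0..1/3} (bform s)"
proof -
  have c1: "continuous_on {0..1/3} (\<lambda>lam. integral {lam..1/3} P3)"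
    by (rule indefinite_integral_continuous_1') (rule integrable_continuous_interval[OF continuous_on_subset[OF contP3]], simp)
  have c2': "continuous_on {1/2..4/3} (\<lambda>u. integral {1/2..u} P1)"
    by (rule indefinite_integral_continuous_1) (rule integrable_continuous_interval[OF continuous_on_subset[OF contP1]], simp)
  have c2: "continuous_on {0..1/3} (\<lambda>lam. integral {1/2..1 + lam} P1)"
    by (rule continuous_on_compose2[OF c2']) (auto intro!: continuous_intros)
  have "continuous_on {0..1/3} (\<lambda>lam. integral {lam..1/3} P3 + integral {1/2..1 + lam} P1 + mixint F \<theta>1 \<theta>2 s)"
    by (intro continuous_intros c1 c2)
  then show ?thesis by (rule continuous_on_cong[THEN iffD1, OF refl, rotated]) (auto simp: bform_P)
qed

lemma bform_ends: "bform s 0 = p_plus F \<theta>1 \<theta>2 s" "bform s (1/3) = q_minus F \<theta>1 \<theta>2 s"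
  by (simp_all add: bform_def p_plus_def q_minus_def)

definition "gform lam = integral {lam..1 + lam} \<psi>1"

lemma gform_cont: assumes "1/3 \<le> L" shows "continuous_on {1/3..L} gform"
proof -
  have c': "continuous_on {1/3..L + 1} (\<lambda>u. integral {1/3..u} P1)"
    by (rule indefinite_integral_continuous_1) (rule integrable_continuous_interval[OF continuous_on_subset[OF contP1]], simp)
  have c1: "continuous_on {1/3..L} (\<lambda>lam. integral {1/3..1 + lam} P1)"
    by (rule continuous_on_compose2[OF c']) (auto intro!: continuous_intros)
  have c2: "continuous_on {1/3..L} (\<lambda>lam. integral {1/3..lam} P1)"
    by (rule continuous_on_compose2[OF c']) (auto intro!: continuous_intros)
  have "continuous_on {1/3..L} (\<lambda>lam. integral {1/3..1 + lam} P1 - integral {1/3..lam} P1)"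
    by (intro continuous_intros c1 c2)
  moreover have eq: "gform lam = integral {1/3..1 + lam} P1 - integral {1/3..lam} P1" if "lam \<in> {1/3..L}" for lam
  proof -
    have "integral {1/3..1 + lam} P1 = integral {1/3..lam} P1 + integral {lam..1 + lam} P1"
      by (rule int_split) (use that contP1 in auto)
    then show ?thesis unfolding gform_def using int_psi1[of lam "1 + lam"] that by simp
  qed
  ultimately show ?thesis using continuous_on_cong[OF refl eq, of "{1/3..L}"] by simp
qed

lemma gform_big: "\<exists>L\<ge>1/3. p \<le> gform L"
proof -
  define x where "x = max \<theta>1 p"
  define L where "L = F x"
  have x: "\<theta>1 \<le> x" by (simp add: x_def)
  have L: "1/3 \<le> L" using m2'[OF order_refl x] vals by (simp add: L_def)
  have px: "\<psi>1 L = x" unfolding L_def by (rule psi1_eq[OF x refl])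
  have "\<psi>1 L * (1 + L - L) \<le> integral {L..1 + L} P1"
  proof (rule int_ge_const)
    fix t assume "L \<le> t" "t \<le> 1 + L"
    then show "\<psi>1 L \<le> P1 t" using psi1_mono'[OF L, of t] P1[of t] L by simp
  qed (auto intro: continuous_on_subset[OF contP1])
  then have "x \<le> gform L" unfolding gform_def using int_psi1[OF L, of "1 + L"] px by simp
  then show ?thesis using L x_def by (intro exI[of _ L]) auto
qed

lemma exist_all:
  assumes s: "0 < s" "s < 1" and p: "0 \<le> p"
  shows "\<exists>lam. solvable s p lam"
proof -
  note I = ineqs[OF s]
  consider "p \<le> p_plus F \<theta>1 \<theta>2 s" | "p_plus F \<theta>1 \<theta>2 s \<le> p" "p \<le> q_minus F \<theta>1 \<theta>2 s"
    | "q_minus F \<theta>1 \<theta>2 s \<le> p" "p \<le> q_plus F \<theta>1" | "q_plus F \<theta>1 \<le> p" by linarith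
  then show ?thesis
  proof cases
    case 1 then show ?thesis using exist_a[OF s p] by blast
  next
    case 2
    then obtain lam where "0 \<le> lam" "lam \<le> 1/3" "bform s lam = p"
      using IVT'[of "bform s" 0 p "1/3"] bform_cont bform_ends by auto
    then show ?thesis using solvb[OF s] by metis
  next
    case 3 then show ?thesis using exist_c[OF s] by blast
  next
    case 4
    obtain L where L: "1/3 \<le> L" "p \<le> gform L" using gform_big by blast
    have "gform (1/3) = q_plus F \<theta>1" by (simp add: gform_def q_plus_def)
    then obtain lam where lam: "1/3 \<le> lam" "lam \<le> L" "gform lam = p"
      using IVT'[of gform "1/3" p L] gform_cont[OF L(1)] L 4 by auto
    have "solvable s (Wf (mkT 1 1 1 1 1) (Hd s lam) 1) lam" using solvd[OF s lam(1)] .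
    then show ?thesis using d_value[OF s lam(1)] lam(3) unfolding gform_def by auto
  qed
qed

end

lemma HJ_intro:
  fixes F :: "real \<Rightarrow> real" and \<theta>1 \<theta>2 \<theta>3 :: real
  assumes smooth: "smooth_fun F"
    and even: "\<And>x. F (- x) = F x"
    and th: "0 < \<theta>3" "\<theta>3 < \<theta>2" "\<theta>2 < \<theta>1"
    and vals: "F 0 = 0" "F \<theta>2 = 1/2" "F \<theta>1 = 1/3" "F \<theta>3 = 1/3"
    and infty: "filterlim F at_top at_top"
    and mono1: "strict_mono_on {0..\<theta>2} F"
    and mono2: "strict_mono_on {\<theta>1..} F"
    and anti: "strict_antimono_on {\<theta>2..\<theta>1} F"
  shows "HJ F \<theta>1 \<theta>2 \<theta>3"
proof
  have "F differentiable (at x)" for x using smooth unfolding smooth_fun_def by (metis funpow_0)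
  then have "isCont F x" for x by (simp add: differentiable_imp_continuous_within)
  then show "continuous_on UNIV F" by (simp add: continuous_at_imp_continuous_on)
  show "F (- x) = F x" for x by (rule even)
  show "0 < \<theta>3" "\<theta>3 < \<theta>2" "\<theta>2 < \<theta>1" by (rule th)+
  show "F 0 = 0" "F \<theta>2 = 1/2" "F \<theta>1 = 1/3" "F \<theta>3 = 1/3" by (rule vals)+
  show "\<exists>x\<ge>\<theta>1. B \<le> F x" for B
  proof -
    have "eventually (\<lambda>x. B \<le> F x) at_top" using infty by (simp add: filterlim_at_top)
    then obtain N where "\<And>x. x \<ge> N \<Longrightarrow> B \<le> F x" by (auto simp: eventually_at_top_linorder)
    then show ?thesis by (intro exI[of _ "max N \<theta>1"]) auto
  qed
  show "F x < F y" if "0 \<le> x" "x < y" "y \<le> \<theta>2" for x y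
    using mono1 that unfolding monotone_on_def by auto
  show "F x < F y" if "\<theta>1 \<le> x" "x < y" for x y
    using mono2 that unfolding monotone_on_def by auto
  show "F y < F x" if "\<theta>2 \<le> x" "x < y" "y \<le> \<theta>1" for x y
    using anti that unfolding monotone_on_def by auto
qed

theorem propositionB1:
  fixes F :: "real \<Rightarrow> real" and \<theta>1 \<theta>2 \<theta>3 s :: real
  assumes smooth: "smooth_fun F"
    and even: "\<And>x. F (- x) = F x"
    and th: "0 < \<theta>3" "\<theta>3 < \<theta>2" "\<theta>2 < \<theta>1"
    and vals: "F 0 = 0" "F \<theta>2 = 1/2" "F \<theta>1 = 1/3" "F \<theta>3 = 1/3"
    and infty: "filterlim F at_top at_top"
    and mono1: "strict_mono_on {0..\<theta>2} F"
    and mono2: "strict_mono_on {\<theta>1..} F"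
    and anti: "strict_antimono_on {\<theta>2..\<theta>1} F"
    and s: "0 < s" "s < 1"
  shows "0 < p_plus F \<theta>1 \<theta>2 s \<and> p_plus F \<theta>1 \<theta>2 s < q_minus F \<theta>1 \<theta>2 s
           \<and> q_minus F \<theta>1 \<theta>2 s < q_plus F \<theta>1
     \<and> (\<forall>p. 0 \<le> p \<and> p \<le> p_plus F \<theta>1 \<theta>2 s \<longrightarrow> Hbar F s p = 0)
     \<and> (\<forall>p. p_plus F \<theta>1 \<theta>2 s \<le> p \<and> p \<le> q_minus F \<theta>1 \<theta>2 s \<longrightarrow>
          (let eq = (\<lambda>lam. p = integral {lam..1/3} (psi3 F \<theta>2)
                             + integral {1/2..1 + lam} (psi1 F \<theta>1) + mixint F \<theta>1 \<theta>2 s)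
           in Hbar F s p \<in> {0..1/3} \<and> eq (Hbar F s p)
              \<and> (\<forall>lam\<in>{0..1/3}. eq lam \<longrightarrow> lam = Hbar F s p)))
     \<and> (\<forall>p. q_minus F \<theta>1 \<theta>2 s \<le> p \<and> p \<le> q_plus F \<theta>1 \<longrightarrow> Hbar F s p = 1/3)
     \<and> (\<forall>p. q_plus F \<theta>1 \<le> p \<longrightarrow>
          (let eq = (\<lambda>lam. p = integral {lam..1 + lam} (psi1 F \<theta>1))
           in Hbar F s p \<ge> 1/3 \<and> eq (Hbar F s p)
              \<and> (\<forall>lam. lam \<ge> 1/3 \<longrightarrow> eq lam \<longrightarrow> lam = Hbar F s p)))
     \<and> (\<forall>p. p < 0 \<longrightarrow> Hbar F s p = Hbar F (1 - s) (- p))"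
proof -
  interpret HJ F \<theta>1 \<theta>2 \<theta>3
    by (rule HJ_intro[OF smooth even th vals infty mono1 mono2 anti])
  note I = ineqs[OF s]
  have A: "\<forall>p. 0 \<le> p \<and> p \<le> p_plus F \<theta>1 \<theta>2 s \<longrightarrow> Hbar F s p = 0"
    using exist_a[OF s] Hbar_solv[OF s] by blast
  have B: "\<forall>p. p_plus F \<theta>1 \<theta>2 s \<le> p \<and> p \<le> q_minus F \<theta>1 \<theta>2 s \<longrightarrow>
          (let eq = (\<lambda>lam. p = integral {lam..1/3} (psi3 F \<theta>2)
                             + integral {1/2..1 + lam} (psi1 F \<theta>1) + mixint F \<theta>1 \<theta>2 s)
           in Hbar F s p \<in> {0..1/3} \<and> eq (Hbar F s p)
              \<and> (\<forall>lam\<in>{0..1/3}. eq lam \<longrightarrow> lam = Hbar F s p))"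
  proof (intro allI impI)
    fix p assume p: "p_plus F \<theta>1 \<theta>2 s \<le> p \<and> p \<le> q_minus F \<theta>1 \<theta>2 s"
    obtain lam where lam: "0 \<le> lam" "lam \<le> 1/3" "bform s lam = p"
      using IVT'[of "bform s" 0 p "1/3"] bform_cont bform_ends p by auto
    have H: "Hbar F s p = lam" using Hbar_solv[OF s] solvb[OF s lam(1,2)] lam(3) by simp
    show "let eq = (\<lambda>lam. p = integral {lam..1/3} (psi3 F \<theta>2)
                             + integral {1/2..1 + lam} (psi1 F \<theta>1) + mixint F \<theta>1 \<theta>2 s)
           in Hbar F s p \<in> {0..1/3} \<and> eq (Hbar F s p)
              \<and> (\<forall>lam\<in>{0..1/3}. eq lam \<longrightarrow> lam = Hbar F s p)"
      unfolding Let_def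
    proof (intro conjI ballI impI)
      show "Hbar F s p \<in> {0..1/3}" using H lam by simp
      show "p = integral {Hbar F s p..1/3} (psi3 F \<theta>2) + integral {1/2..1 + Hbar F s p} (psi1 F \<theta>1)
          + mixint F \<theta>1 \<theta>2 s" using H lam(3) by (simp add: bform_def)
      fix l assume l: "l \<in> {0..1/3}"
        and e: "p = integral {l..1/3} (psi3 F \<theta>2) + integral {1/2..1 + l} (psi1 F \<theta>1) + mixint F \<theta>1 \<theta>2 s"
      have "bform s l = p" using e by (simp add: bform_def)
      then have "solvable s p l" using solvb[OF s, of l] l by auto
      then show "l = Hbar F s p" using Hbar_solv[OF s] by simp
    qed
  qed
  have C: "\<forall>p. q_minus F \<theta>1 \<theta>2 s \<le> p \<and> p \<le> q_plus F \<theta>1 \<longrightarrow> Hbar F s p = 1/3"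
    using exist_c[OF s] Hbar_solv[OF s] by blast
  have D: "\<forall>p. q_plus F \<theta>1 \<le> p \<longrightarrow>
          (let eq = (\<lambda>lam. p = integral {lam..1 + lam} (psi1 F \<theta>1))
           in Hbar F s p \<ge> 1/3 \<and> eq (Hbar F s p)
              \<and> (\<forall>lam. lam \<ge> 1/3 \<longrightarrow> eq lam \<longrightarrow> lam = Hbar F s p))"
  proof (intro allI impI)
    fix p assume p: "q_plus F \<theta>1 \<le> p"
    obtain L where L: "1/3 \<le> L" "p \<le> gform L" using gform_big by blast
    have "gform (1/3) = q_plus F \<theta>1" by (simp add: gform_def q_plus_def)
    then obtain lam where lam: "1/3 \<le> lam" "lam \<le> L" "gform lam = p"
      using IVT'[of gform "1/3" p L] gform_cont[OF L(1)] L p by auto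
    have sv: "solvable s p lam" if "1/3 \<le> lam" "gform lam = p" for lam
      using solvd[OF s that(1)] d_value[OF s that(1)] that(2) unfolding gform_def by auto
    have H: "Hbar F s p = lam" using Hbar_solv[OF s sv[OF lam(1,3)]] .
    show "let eq = (\<lambda>lam. p = integral {lam..1 + lam} (psi1 F \<theta>1))
           in Hbar F s p \<ge> 1/3 \<and> eq (Hbar F s p)
              \<and> (\<forall>lam. lam \<ge> 1/3 \<longrightarrow> eq lam \<longrightarrow> lam = Hbar F s p)"
      unfolding Let_def
    proof (intro conjI allI impI)
      show "1/3 \<le> Hbar F s p" using H lam by simp
      show "p = integral {Hbar F s p..1 + Hbar F s p} (psi1 F \<theta>1)" using H lam(3) by (simp add: gform_def)
      fix l assume l: "1/3 \<le> l" and e: "p = integral {l..1 + l} (psi1 F \<theta>1)"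
      have "gform l = p" using e by (simp add: gform_def)
      then show "l = Hbar F s p" using Hbar_solv[OF s sv[OF l]] by simp
    qed
  qed
  have E: "\<forall>p. p < 0 \<longrightarrow> Hbar F s p = Hbar F (1 - s) (- p)"
  proof (intro allI impI)
    fix p :: real assume p: "p < 0"
    have s': "0 < 1 - s" "1 - s < 1" using s by auto
    obtain lam where lam: "solvable (1 - s) (- p) lam" using exist_all[OF s', of "- p"] p by auto
    have h1: "Hbar F (1 - s) (- p) = lam" using Hbar_solv[OF s' lam] .
    have "solvable (1 - (1 - s)) (- (- p)) lam" using solv_reflect[OF s' lam] .
    then have "solvable s p lam" by simp
    then have "Hbar F s p = lam" using Hbar_solv[OF s] by simp
    then show "Hbar F s p = Hbar F (1 - s) (- p)" using h1 by simp
  qed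
  show ?thesis using I A B C D E by blast
qed


end
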